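(* Let $\Gamma_t$ and $\Sigma_t$ be mean curvature flows of hypersurfaces in $\mathbb R^{n+1}$ with each $\Sigma_t$ proper and $\Gamma_t\cap\Sigma_t=\emptyset$, and let $d(x,t)=\inf_{y\in\Sigma_t}|x-y|$. Let $c_1,c_2\in\mathbb R$, $x_0\in\mathbb R^{n+1}$, and $f(x,t)=c_1+c_2(|x-x_0|^2+2nt)$. Then $\Box_{\Gamma_t}(e^f d^{-1})\le 0$ in the viscosity sense: for every $(y_0,t_0)$ with $y_0\in\Gamma_{t_0}$ and every $C^2$ function $\phi$ on the space-time track near $(y_0,t_0)$ with $\phi\ge e^fd^{-1}$ for $t\le t_0$ near $(y_0,t_0)$ and equality at $(y_0,t_0)$, one has $\Box_{\Gamma_t}\phi(y_0,t_0)\le 0$.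
   Context: A hypersurface immersion is proper if its intersection with every compact set is compact. Sign conventions: the mean curvature is the sum of the principal curvatures, taken so that the round sphere $\partial B_r(c)$ with unit normal $(x-c)/r$ has all principal curvatures $-1/r$. A mean curvature flow is a smooth family of immersed hypersurfaces $\Gamma_t$ with unit normal $\mathbf n_{\Gamma_t}$ and mean curvature $H_{\Gamma_t}$ whose points move by $\partial_t x=H_{\Gamma_t}\mathbf n_{\Gamma_t}$. $\Box_{\Gamma_t}u=\partial_t u-\Delta_{\Gamma_t}u$, with $\partial_t$ the derivative along normal trajectories $x'(t)=H_{\Gamma_t}\mathbf n_{\Gamma_t}$ and $\Delta_{\Gamma_t}$ the Laplace–Beltrami operator of $\Gamma_t$. *)

theory Defs
  imports "HOL-Analysis.Analysis"
begin

definition dirD :: "'a::real_normed_vector \<Rightarrow> ('a \<Rightarrow> 'b::real_normed_vector) \<Rightarrow> 'a \<Rightarrow> 'b" where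
  "dirD b f x = vector_derivative (\<lambda>s. f (x + s *\<^sub>R b)) (at 0)"

fun Ck :: "nat \<Rightarrow> 'a::euclidean_space set \<Rightarrow> ('a \<Rightarrow> 'b::real_normed_vector) \<Rightarrow> bool" where
  "Ck 0 S f = continuous_on S f"
| "Ck (Suc k) S f = (continuous_on S f \<and> (\<forall>x\<in>S. f differentiable (at x))
       \<and> (\<forall>b\<in>Basis. Ck k S (dirD b f)))"

definition smooth_on :: "'a::euclidean_space set \<Rightarrow> ('a \<Rightarrow> 'b::real_normed_vector) \<Rightarrow> bool" where
  "smooth_on S f \<longleftrightarrow> (\<forall>k. Ck k S f)"

definition smooth_atlas :: "((real^'n) set \<times> (real^'n \<Rightarrow> 'm::topological_space)) set \<Rightarrow> bool" where
  "smooth_atlas A \<longleftrightarrow>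
     (\<Union>(U,\<psi>)\<in>A. \<psi> ` U) = UNIV \<and>
     (\<forall>(U,\<psi>)\<in>A. open U \<and> open (\<psi> ` U) \<and> (\<exists>\<phi>. homeomorphism U (\<psi> ` U) \<psi> \<phi>)) \<and>
     (\<forall>(U,\<psi>)\<in>A. \<forall>(V,\<rho>)\<in>A. smooth_on {u\<in>U. \<psi> u \<in> \<rho> ` V} (\<lambda>u. inv_into V \<rho> (\<psi> u)))"

text \<open>X : (u,t) \<mapsto> position, u in the chart domain, t time.\<close>

definition Du :: "'n \<Rightarrow> ((real^'n) \<times> real \<Rightarrow> 'b::real_normed_vector) \<Rightarrow> (real^'n) \<times> real \<Rightarrow> 'b" where
  "Du i g p = dirD (axis i 1, 0) g p"

definition Dt :: "((real^'n::finite) \<times> real \<Rightarrow> 'b::real_normed_vector) \<Rightarrow> (real^'n) \<times> real \<Rightarrow> 'b" where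
  "Dt g p = dirD (0, 1) g p"

definition gmat :: "((real^'n::finite) \<times> real \<Rightarrow> real^'N::finite) \<Rightarrow> (real^'n) \<times> real \<Rightarrow> real^'n^'n" where
  "gmat X p = (\<chi> i j. Du i X p \<bullet> Du j X p)"

definition ginv :: "((real^'n::finite) \<times> real \<Rightarrow> real^'N::finite) \<Rightarrow> (real^'n) \<times> real \<Rightarrow> real^'n^'n" where
  "ginv X p = matrix_inv (gmat X p)"

text \<open>Mean curvature (sum of principal curvatures) w.r.t. the unit normal \<nu>;
  h_ij = (d_i d_j X) . \<nu>, so the sphere with outer normal has curvatures -1/r.\<close>
definition mean_curv :: "((real^'n::finite) \<times> real \<Rightarrow> real^'N::finite) \<Rightarrow> ((real^'n) \<times> real \<Rightarrow> real^'N)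
      \<Rightarrow> (real^'n) \<times> real \<Rightarrow> real" where
  "mean_curv X \<nu> p = (\<Sum>i\<in>UNIV. \<Sum>j\<in>UNIV. ginv X p $ i $ j * (Du i (Du j X) p \<bullet> \<nu> p))"

definition christoffel :: "((real^'n::finite) \<times> real \<Rightarrow> real^'N::finite) \<Rightarrow> 'n \<Rightarrow> 'n \<Rightarrow> 'n
      \<Rightarrow> (real^'n) \<times> real \<Rightarrow> real" where
  "christoffel X k i j p = (\<Sum>l\<in>UNIV. ginv X p $ k $ l * (Du i (Du j X) p \<bullet> Du l X p))"

definition laplace_beltrami :: "((real^'n::finite) \<times> real \<Rightarrow> real^'N::finite) \<Rightarrow> ((real^'n) \<times> real \<Rightarrow> real)
      \<Rightarrow> (real^'n) \<times> real \<Rightarrow> real" where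
  "laplace_beltrami X u p = (\<Sum>i\<in>UNIV. \<Sum>j\<in>UNIV. ginv X p $ i $ j *
       (Du i (Du j u) p - (\<Sum>k\<in>UNIV. christoffel X k i j p * Du k u p)))"

text \<open>Heat operator Box u = d_t u - Delta u; in a normal parametrisation
  (d_t X = H \<nu>) the time derivative at fixed u is along normal trajectories.\<close>
definition heat_op :: "((real^'n::finite) \<times> real \<Rightarrow> real^'N::finite) \<Rightarrow> ((real^'n) \<times> real \<Rightarrow> real)
      \<Rightarrow> (real^'n) \<times> real \<Rightarrow> real" where
  "heat_op X u p = Dt u p - laplace_beltrami X u p"

text \<open>F p t is the position at time t of the point p of the parameter manifold;
  N p t is the chosen unit normal.\<close>
definition mcf :: "((real^'n::finite) set \<times> (real^'n \<Rightarrow> 'm::topological_space)) set \<Rightarrow> real set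
      \<Rightarrow> ('m \<Rightarrow> real \<Rightarrow> real^'N::finite) \<Rightarrow> ('m \<Rightarrow> real \<Rightarrow> real^'N) \<Rightarrow> bool" where
  "mcf A I F N \<longleftrightarrow> smooth_atlas A \<and> open I \<and> is_interval I \<and>
     (\<forall>(U,\<psi>)\<in>A.
        smooth_on (U \<times> I) (\<lambda>(u,t). F (\<psi> u) t) \<and>
        smooth_on (U \<times> I) (\<lambda>(u,t). N (\<psi> u) t) \<and>
        (\<forall>u\<in>U. \<forall>t\<in>I.
           norm (N (\<psi> u) t) = 1 \<and>
           (\<forall>i. N (\<psi> u) t \<bullet> Du i (\<lambda>(u,t). F (\<psi> u) t) (u,t) = 0) \<and>
           (\<forall>v::real^'n. (\<Sum>i\<in>UNIV. v $ i *\<^sub>R Du i (\<lambda>(u,t). F (\<psi> u) t) (u,t)) = 0 \<longrightarrow> v = 0) \<and>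
           Dt (\<lambda>(u,t). F (\<psi> u) t) (u,t) =
             mean_curv (\<lambda>(u,t). F (\<psi> u) t) (\<lambda>(u,t). N (\<psi> u) t) (u,t) *\<^sub>R N (\<psi> u) t))"

definition proper_fun :: "('m::topological_space \<Rightarrow> 'b::topological_space) \<Rightarrow> bool" where
  "proper_fun g \<longleftrightarrow> (\<forall>K. compact K \<longrightarrow> compact (g -` K))"

end

theory Submission
  imports Defs
begin


lemma gram_inj:
  fixes Xv :: "'n::finite \<Rightarrow> real^'N::finite"
  assumes imm: "\<forall>v::real^'n. (\<Sum>i\<in>UNIV. v $ i *\<^sub>R Xv i) = 0 \<longrightarrow> v = 0"
  shows "matrix_inv (\<chi> i j. Xv i \<bullet> Xv j) ** (\<chi> i j. Xv i \<bullet> Xv j) = mat 1"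
proof -
  define g where "g = (\<chi> i j. Xv i \<bullet> Xv j)"
  have "\<forall>x. g *v x = 0 \<longrightarrow> x = 0"
  proof (intro allI impI)
    fix x assume gx: "g *v x = 0"
    have "(\<Sum>i\<in>UNIV. x $ i *\<^sub>R Xv i) \<bullet> (\<Sum>j\<in>UNIV. x $ j *\<^sub>R Xv j)
        = (\<Sum>i\<in>UNIV. x $ i * (g *v x) $ i)"
      by (simp add: inner_sum_left inner_sum_right g_def matrix_vector_mult_def sum_distrib_left inner_commute mult_ac)
    also have "\<dots> = 0" using gx by simp
    finally have "(\<Sum>i\<in>UNIV. x $ i *\<^sub>R Xv i) = 0" by simp
    with imm show "x = 0" by blast
  qed
  then have "\<exists>B. B ** g = mat 1" using matrix_left_invertible_ker by blast
  then have inv: "invertible g" using invertible_left_inverse by blast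
  then obtain A' where "g ** A' = mat 1 \<and> A' ** g = mat 1" unfolding invertible_def by blast
  then have "g ** matrix_inv g = mat 1 \<and> matrix_inv g ** g = mat 1"
    unfolding matrix_inv_def by (rule someI)
  then show ?thesis unfolding g_def by simp
qed

lemma gram_inv_entry:
  fixes Xv :: "'n::finite \<Rightarrow> real^'N::finite"
  assumes imm: "\<forall>v::real^'n. (\<Sum>i\<in>UNIV. v $ i *\<^sub>R Xv i) = 0 \<longrightarrow> v = 0"
  shows "(\<Sum>m\<in>UNIV. matrix_inv (\<chi> i j. Xv i \<bullet> Xv j) $ l $ m * (Xv m \<bullet> Xv i)) = (if l = i then 1 else 0)"
proof -
  have "(matrix_inv (\<chi> i j. Xv i \<bullet> Xv j) ** (\<chi> i j. Xv i \<bullet> Xv j)) $ l $ i = mat 1 $ l $ i"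
    using gram_inj[OF imm] by simp
  then show ?thesis by (simp add: matrix_matrix_mult_def mat_def)
qed

lemma span_frame:
  fixes Xv :: "'n::finite \<Rightarrow> real^'N::finite" and \<nu> :: "real^'N"
  assumes imm: "\<forall>v::real^'n. (\<Sum>i\<in>UNIV. v $ i *\<^sub>R Xv i) = 0 \<longrightarrow> v = 0"
    and orth: "\<forall>i. \<nu> \<bullet> Xv i = 0" and nu1: "norm \<nu> = 1"
    and dim: "CARD('N) = CARD('n) + 1"
  shows "\<exists>a b. Z = (\<Sum>i\<in>UNIV. a i *\<^sub>R Xv i) + b *\<^sub>R \<nu>"
proof -
  have injX: "inj Xv"
  proof (rule injI)
    fix i j assume eq: "Xv i = Xv j"
    show "i = j"
    proof (rule ccontr)
      assume ne: "i \<noteq> j"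
      define v :: "real^'n" where "v = axis i 1 - axis j 1"
      have "(\<Sum>k\<in>UNIV. v $ k *\<^sub>R Xv k) = Xv i - Xv j"
        using ne by (simp add: v_def axis_def scaleR_diff_left sum_subtractf
              if_distrib[where f="\<lambda>x. x *\<^sub>R _"] cong: if_cong)
      then have "v = 0" using imm eq by simp
      then have "v $ i = 0" by simp
      then show False using ne by (simp add: v_def axis_def)
    qed
  qed
  have nuX: "\<nu> \<notin> range Xv"
  proof
    assume "\<nu> \<in> range Xv"
    then obtain i where "\<nu> = Xv i" by blast
    then have "\<nu> \<bullet> \<nu> = 0" using orth by simp
    then show False using nu1 by (simp add: norm_eq_sqrt_inner)
  qed
  define B where "B = insert \<nu> (range Xv)"
  have finB: "finite B" unfolding B_def by simp
  have cardB: "card B = CARD('n) + 1"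
    unfolding B_def using nuX injX by (simp add: card_image)
  have indB: "independent B"
    unfolding independent_explicit
  proof (intro conjI finB allI impI ballI)
    fix c v assume sc: "(\<Sum>v\<in>B. c v *\<^sub>R v) = 0" and vB: "v \<in> B"
    have "(\<Sum>v\<in>B. c v *\<^sub>R v) = c \<nu> *\<^sub>R \<nu> + (\<Sum>i\<in>UNIV. c (Xv i) *\<^sub>R Xv i)"
      unfolding B_def using nuX injX by (simp add: sum.reindex)
    then have eq0: "c \<nu> *\<^sub>R \<nu> + (\<Sum>i\<in>UNIV. c (Xv i) *\<^sub>R Xv i) = 0" using sc by simp
    have "\<nu> \<bullet> (c \<nu> *\<^sub>R \<nu> + (\<Sum>i\<in>UNIV. c (Xv i) *\<^sub>R Xv i)) = c \<nu>"
      using orth nu1 by (simp add: inner_add_right inner_sum_right norm_eq_sqrt_inner)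
    then have c0: "c \<nu> = 0" using eq0 by simp
    then have "(\<Sum>i\<in>UNIV. (\<chi> k. c (Xv k)) $ i *\<^sub>R Xv i) = 0" using eq0 by simp
    then have "(\<chi> k. c (Xv k)) = 0" using imm by blast
    then have "\<forall>k. c (Xv k) = 0" by (metis vec_lambda_beta zero_index)
    then show "c v = 0" using vB c0 unfolding B_def by auto
  qed
  have "UNIV \<subseteq> span B"
    by (rule card_ge_dim_independent[OF _ indB]) (use cardB dim in auto)
  then have "Z \<in> span B" by blast
  then obtain u where u: "Z = (\<Sum>v\<in>B. u v *\<^sub>R v)" using span_finite[OF finB] by auto
  also have "\<dots> = (\<Sum>i\<in>UNIV. u (Xv i) *\<^sub>R Xv i) + u \<nu> *\<^sub>R \<nu>"
    unfolding B_def using nuX injX by (simp add: sum.reindex)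
  finally show ?thesis by (intro exI[of _ "\<lambda>i. u (Xv i)"] exI[of _ "u \<nu>"])
qed

lemma decomp_frame:
  fixes Xv :: "'n::finite \<Rightarrow> real^'N::finite" and \<nu> :: "real^'N"
  assumes imm: "\<forall>v::real^'n. (\<Sum>i\<in>UNIV. v $ i *\<^sub>R Xv i) = 0 \<longrightarrow> v = 0"
    and orth: "\<forall>i. \<nu> \<bullet> Xv i = 0" and nu1: "norm \<nu> = 1"
    and dim: "CARD('N) = CARD('n) + 1"
  shows "Z = (\<Sum>l\<in>UNIV. (\<Sum>m\<in>UNIV. matrix_inv (\<chi> i j. Xv i \<bullet> Xv j) $ l $ m * (Z \<bullet> Xv m)) *\<^sub>R Xv l)
             + (Z \<bullet> \<nu>) *\<^sub>R \<nu>"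
proof -
  define gi where "gi = matrix_inv (\<chi> i j. Xv i \<bullet> Xv j)"
  obtain a b where Z: "Z = (\<Sum>i\<in>UNIV. a i *\<^sub>R Xv i) + b *\<^sub>R \<nu>"
    using span_frame[OF imm orth nu1 dim] by blast
  have nn: "\<nu> \<bullet> \<nu> = 1" using nu1 by (simp add: norm_eq_sqrt_inner)
  have orth': "Xv i \<bullet> \<nu> = 0" for i using orth by (simp add: inner_commute)
  have Zn: "Z \<bullet> \<nu> = b" using orth' nn
    by (simp add: Z inner_add_left inner_sum_left)
  have ZX: "Z \<bullet> Xv m = (\<Sum>i\<in>UNIV. a i * (Xv i \<bullet> Xv m))" for m
    using orth by (simp add: Z inner_add_left inner_sum_left)
  have "(\<Sum>m\<in>UNIV. gi $ l $ m * (Z \<bullet> Xv m)) = a l" for l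
  proof -
    have "(\<Sum>m\<in>UNIV. gi $ l $ m * (Z \<bullet> Xv m)) = (\<Sum>i\<in>UNIV. a i * (\<Sum>m\<in>UNIV. gi $ l $ m * (Xv m \<bullet> Xv i)))"
      by (simp add: ZX sum_distrib_left sum_distrib_right mult_ac, subst sum.swap, simp add: inner_commute)
    also have "\<dots> = (\<Sum>i\<in>UNIV. a i * (if l = i then 1 else 0))"
      using gram_inv_entry[OF imm] unfolding gi_def by simp
    also have "\<dots> = a l" by (simp add: if_distrib cong: if_cong)
    finally show ?thesis .
  qed
  then show ?thesis unfolding gi_def[symmetric] using Z Zn by simp
qed

lemma onb_hyperplane:
  fixes \<nu> :: "real^'N::finite"
  assumes nu1: "norm \<nu> = 1" and dim: "CARD('N) = CARD('n::finite) + 1"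
  obtains \<tau> :: "'n::finite \<Rightarrow> real^'N" where "\<And>k. norm (\<tau> k) = 1" "\<And>k. \<tau> k \<bullet> \<nu> = 0"
    "\<And>Z. Z \<bullet> \<nu> = 0 \<Longrightarrow> Z = (\<Sum>k\<in>UNIV. (Z \<bullet> \<tau> k) *\<^sub>R \<tau> k)"
proof -
  define S where "S = {x. \<nu> \<bullet> x = 0}"
  have subS: "subspace S" unfolding S_def by (rule subspace_hyperplane)
  have nz: "\<nu> \<noteq> 0" using nu1 by auto
  obtain B where BS: "B \<subseteq> S" and po: "pairwise orthogonal B" and n1: "\<And>x. x \<in> B \<Longrightarrow> norm x = 1"
    and indB: "independent B" and cB: "card B = dim S" and spB: "span B = S"
    using orthonormal_basis_subspace[OF subS] by blast
  have finB: "finite B" using indB independent_explicit by blast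
  have "dim S = DIM(real^'N) - 1" unfolding S_def by (rule dim_hyperplane[OF nz])
  also have "\<dots> = CARD('n)" using dim by simp
  finally have "card (UNIV::'n set) = card B" using cB by simp
  then have "\<exists>h. bij_betw h (UNIV::'n set) B" by (intro finite_same_card_bij[OF _ finB]) auto
  then obtain h where h: "bij_betw h (UNIV::'n set) B" by blast
  have pars: "Z = (\<Sum>b\<in>B. (Z \<bullet> b) *\<^sub>R b)" if "Z \<in> S" for Z
  proof -
    define D where "D = Z - (\<Sum>b\<in>B. (Z \<bullet> b) *\<^sub>R b)"
    have Dc: "orthogonal D c" if cB: "c \<in> B" for c
    proof -
      have "(\<Sum>b\<in>B. (Z \<bullet> b) * (b \<bullet> c)) = (\<Sum>b\<in>B. if b = c then Z \<bullet> c else 0)"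
      proof (rule sum.cong[OF refl])
        fix b assume bB: "b \<in> B"
        show "(Z \<bullet> b) * (b \<bullet> c) = (if b = c then Z \<bullet> c else 0)"
        proof (cases "b = c")
          case True
          then have "b \<bullet> c = 1" using n1[OF cB] by (simp add: norm_eq_sqrt_inner)
          then show ?thesis using True by simp
        next
          case False
          then have "b \<bullet> c = 0" using po bB cB unfolding pairwise_def orthogonal_def by blast
          then show ?thesis using False by simp
        qed
      qed
      also have "\<dots> = Z \<bullet> c" using cB finB by (simp add: sum.delta')
      finally show ?thesis unfolding D_def orthogonal_def
        by (simp add: inner_diff_left inner_sum_left)
    qed
    have Zs: "Z \<in> span B" using that spB by simp
    have "(\<Sum>b\<in>B. (Z \<bullet> b) *\<^sub>R b) \<in> span B"
      by (rule span_sum, rule span_scale, rule span_base)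
    then have "D \<in> span B" unfolding D_def using Zs by (rule span_diff[rotated])
    then have "orthogonal D D" using Dc orthogonal_to_span by blast
    then have "D = 0" by (simp add: orthogonal_def)
    then show ?thesis unfolding D_def by simp
  qed
  show ?thesis
  proof (rule that[of h])
    fix k
    have hk: "h k \<in> B" using h bij_betwE by blast
    show "norm (h k) = 1" using n1[OF hk] .
    have "\<nu> \<bullet> h k = 0" using BS hk unfolding S_def by blast
    then show "h k \<bullet> \<nu> = 0" by (simp only: inner_commute)
  next
    fix Z assume "Z \<bullet> \<nu> = 0"
    then have "\<nu> \<bullet> Z = 0" by (simp only: inner_commute)
    then have "Z \<in> S" unfolding S_def by blast
    then have "Z = (\<Sum>b\<in>B. (Z \<bullet> b) *\<^sub>R b)" by (rule pars)
    also have "\<dots> = (\<Sum>k\<in>UNIV. (Z \<bullet> h k) *\<^sub>R h k)"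
      using sum.reindex_bij_betw[OF h, of "\<lambda>b. (Z \<bullet> b) *\<^sub>R b"] by simp
    finally show "Z = (\<Sum>k\<in>UNIV. (Z \<bullet> h k) *\<^sub>R h k)" .
  qed
qed

lemma frame_coords:
  fixes Xv :: "'n::finite \<Rightarrow> real^'N::finite" and \<nu> :: "real^'N" and \<tau> :: "'n \<Rightarrow> real^'N"
  assumes imm: "\<forall>v::real^'n. (\<Sum>i\<in>UNIV. v $ i *\<^sub>R Xv i) = 0 \<longrightarrow> v = 0"
    and orth: "\<forall>i. \<nu> \<bullet> Xv i = 0" and nu1: "norm \<nu> = 1"
    and dim: "CARD('N) = CARD('n) + 1"
    and tn: "\<And>k. \<tau> k \<bullet> \<nu> = 0"
    and pars: "\<And>Z. Z \<bullet> \<nu> = 0 \<Longrightarrow> Z = (\<Sum>k\<in>UNIV. (Z \<bullet> \<tau> k) *\<^sub>R \<tau> k)"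
  defines "gi \<equiv> matrix_inv (\<chi> i j. Xv i \<bullet> Xv j)"
  defines "P \<equiv> (\<lambda>i k. \<Sum>m\<in>UNIV. gi $ i $ m * (Xv m \<bullet> \<tau> k))"
  shows "\<And>k. \<tau> k = (\<Sum>i\<in>UNIV. P i k *\<^sub>R Xv i)"
    and "\<And>i j. (\<Sum>k\<in>UNIV. P i k * P j k) = gi $ i $ j"
proof -
  fix k
  have "\<tau> k = (\<Sum>l\<in>UNIV. (\<Sum>m\<in>UNIV. gi $ l $ m * (\<tau> k \<bullet> Xv m)) *\<^sub>R Xv l) + (\<tau> k \<bullet> \<nu>) *\<^sub>R \<nu>"
    unfolding gi_def by (rule decomp_frame[OF imm orth nu1 dim])
  then show "\<tau> k = (\<Sum>i\<in>UNIV. P i k *\<^sub>R Xv i)" using tn by (simp add: P_def inner_commute)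
next
  fix i j
  have Xn: "Xv m \<bullet> \<nu> = 0" for m using orth by (simp add: inner_commute)
  have XX: "Xv m \<bullet> Xv l = (\<Sum>k\<in>UNIV. (Xv m \<bullet> \<tau> k) * (Xv l \<bullet> \<tau> k))" for m l
  proof -
    have "Xv m \<bullet> Xv l = (\<Sum>k\<in>UNIV. (Xv m \<bullet> \<tau> k) *\<^sub>R \<tau> k) \<bullet> Xv l" using pars[OF Xn[of m]] by simp
    also have "\<dots> = (\<Sum>k\<in>UNIV. (Xv m \<bullet> \<tau> k) * (\<tau> k \<bullet> Xv l))" by (simp only: inner_sum_left inner_scaleR_left)
    also have "\<dots> = (\<Sum>k\<in>UNIV. (Xv m \<bullet> \<tau> k) * (Xv l \<bullet> \<tau> k))" by (simp only: inner_commute[of "\<tau> _" "Xv l"])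
    finally show ?thesis .
  qed
  have ge: "(\<Sum>l\<in>UNIV. gi $ j $ l * (Xv l \<bullet> Xv m)) = (if j = m then 1 else 0)" for m
    unfolding gi_def by (rule gram_inv_entry[OF imm])
  have "(\<Sum>k\<in>UNIV. P i k * P j k)
      = (\<Sum>k\<in>UNIV. \<Sum>m\<in>UNIV. \<Sum>l\<in>UNIV. gi $ i $ m * gi $ j $ l * ((Xv m \<bullet> \<tau> k) * (Xv l \<bullet> \<tau> k)))"
    by (simp add: P_def sum_distrib_left sum_distrib_right mult_ac, rule sum.cong[OF refl], subst sum.swap, simp add: mult_ac)
  also have "\<dots> = (\<Sum>m\<in>UNIV. \<Sum>l\<in>UNIV. \<Sum>k\<in>UNIV. gi $ i $ m * gi $ j $ l * ((Xv m \<bullet> \<tau> k) * (Xv l \<bullet> \<tau> k)))"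
    by (subst sum.swap, rule sum.cong[OF refl], rule sum.swap)
  also have "\<dots> = (\<Sum>m\<in>UNIV. \<Sum>l\<in>UNIV. gi $ i $ m * gi $ j $ l * (Xv m \<bullet> Xv l))"
    by (simp add: XX sum_distrib_left)
  also have "\<dots> = (\<Sum>m\<in>UNIV. gi $ i $ m * (\<Sum>l\<in>UNIV. gi $ j $ l * (Xv l \<bullet> Xv m)))"
    by (simp add: sum_distrib_left mult_ac inner_commute)
  also have "\<dots> = gi $ i $ j" by (simp add: ge if_distrib cong: if_cong)
  finally show "(\<Sum>k\<in>UNIV. P i k * P j k) = gi $ i $ j" .
qed

lemma reflect_frame:
  fixes \<nu> e :: "real^'N::finite" and \<tau> :: "'n::finite \<Rightarrow> real^'N"
  assumes nu1: "norm \<nu> = 1" and e1: "norm e = 1" and c0: "\<nu> \<bullet> e \<le> 0"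
    and tn: "\<And>k. \<tau> k \<bullet> \<nu> = 0"
    and pars: "\<And>Z. Z \<bullet> \<nu> = 0 \<Longrightarrow> Z = (\<Sum>k\<in>UNIV. (Z \<bullet> \<tau> k) *\<^sub>R \<tau> k)"
  obtains \<sigma> :: "'n \<Rightarrow> real^'N" where "\<And>k. \<sigma> k \<bullet> e = 0"
    "\<And>Z. Z \<bullet> e = 0 \<Longrightarrow> Z = (\<Sum>k\<in>UNIV. (Z \<bullet> \<sigma> k) *\<^sub>R \<sigma> k)"
    "\<And>k. (norm (\<tau> k - \<sigma> k))\<^sup>2 \<le> 2 * (e \<bullet> \<tau> k)\<^sup>2"
proof -
  define c where "c = \<nu> \<bullet> e"
  define m where "m = \<nu> - e"
  define R where "R = (\<lambda>x::real^'N. x - ((x \<bullet> m) / (1 - c)) *\<^sub>R m)"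
  have nn: "\<nu> \<bullet> \<nu> = 1" using nu1 by (simp add: norm_eq_sqrt_inner)
  have ee: "e \<bullet> e = 1" using e1 by (simp add: norm_eq_sqrt_inner)
  have c1: "1 - c \<ge> 1" using c0 c_def by simp
  have mm: "m \<bullet> m = 2 * (1 - c)" unfolding m_def c_def using nn ee
    by (simp add: inner_diff_left inner_diff_right inner_commute)
  have RR: "R x \<bullet> R y = x \<bullet> y" for x y
  proof -
    define k where "k = 1 - c"
    have k0: "k \<noteq> 0" using c1 k_def by simp
    have "R x \<bullet> R y = x \<bullet> y - (x \<bullet> m) / k * (m \<bullet> y) - (y \<bullet> m) / k * (x \<bullet> m) + (x \<bullet> m) / k * ((y \<bullet> m) / k * (m \<bullet> m))"
      unfolding R_def k_def[symmetric] by (simp add: inner_diff_left inner_diff_right inner_commute)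
    also have "\<dots> = x \<bullet> y - 2 * (x \<bullet> m) * (m \<bullet> y) / k + 2 * (x \<bullet> m) * (y \<bullet> m) / k"
      using k0 by (simp add: mm k_def[symmetric] field_simps power2_eq_square inner_commute[of m y])
    also have "\<dots> = x \<bullet> y" by (simp add: inner_commute)
    finally show ?thesis .
  qed
  have Rnu: "R \<nu> = e"
  proof -
    have "\<nu> \<bullet> m = 1 - c" unfolding m_def c_def using nn by (simp add: inner_diff_right)
    then show ?thesis unfolding R_def using c1 by (simp add: m_def)
  qed
  have Re: "R e = \<nu>"
  proof -
    have "e \<bullet> m = - (1 - c)" unfolding m_def c_def using ee by (simp add: inner_diff_right inner_commute)
    moreover have "- (1 - c) / (1 - c) = -1" using c1 by (simp add: field_simps)
    ultimately show ?thesis unfolding R_def by (simp add: m_def)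
  qed
  have linR: "linear R" unfolding R_def
    by (rule linearI) (simp_all add: inner_add_left scaleR_add_left add_divide_distrib algebra_simps)
  have RRx: "R (R x) = x" for x
  proof -
    have "R x \<bullet> m = x \<bullet> m - (x \<bullet> m) / (1 - c) * (m \<bullet> m)" unfolding R_def by (simp add: inner_diff_left)
    also have "\<dots> = - (x \<bullet> m)" using c1 by (simp add: mm field_simps)
    finally have "R x \<bullet> m = - (x \<bullet> m)" .
    then show ?thesis unfolding R_def by (simp add: R_def)
  qed
  define \<sigma> where "\<sigma> = (\<lambda>k. R (\<tau> k))"
  show ?thesis
  proof (rule that[of \<sigma>])
    fix k
    show "\<sigma> k \<bullet> e = 0" unfolding \<sigma>_def using RR[of "\<tau> k" \<nu>] Rnu tn by simp
  next
    fix Z assume Ze: "Z \<bullet> e = 0"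
    have "R Z \<bullet> \<nu> = 0" using RR[of Z e] Re Ze by simp
    then have "R Z = (\<Sum>k\<in>UNIV. (R Z \<bullet> \<tau> k) *\<^sub>R \<tau> k)" by (rule pars)
    then have "R (R Z) = R (\<Sum>k\<in>UNIV. (R Z \<bullet> \<tau> k) *\<^sub>R \<tau> k)" by simp
    also have "\<dots> = (\<Sum>k\<in>UNIV. (R Z \<bullet> \<tau> k) *\<^sub>R R (\<tau> k))"
      using linR by (simp add: linear_sum linear_scale o_def)
    also have "\<dots> = (\<Sum>k\<in>UNIV. (Z \<bullet> \<sigma> k) *\<^sub>R \<sigma> k)"
    proof -
      have "R Z \<bullet> \<tau> k = Z \<bullet> \<sigma> k" for k
        unfolding \<sigma>_def using RR[of Z "R (\<tau> k)"] RRx[of "\<tau> k"] by simp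
      then show ?thesis unfolding \<sigma>_def by simp
    qed
    finally show "Z = (\<Sum>k\<in>UNIV. (Z \<bullet> \<sigma> k) *\<^sub>R \<sigma> k)" using RRx by simp
  next
    fix k
    have tm: "\<tau> k \<bullet> m = - (e \<bullet> \<tau> k)" unfolding m_def using tn[of k] by (simp add: inner_diff_right inner_commute)
    have "\<tau> k - \<sigma> k = ((\<tau> k \<bullet> m) / (1 - c)) *\<^sub>R m" unfolding \<sigma>_def R_def by simp
    then have "(norm (\<tau> k - \<sigma> k))\<^sup>2 = (((\<tau> k \<bullet> m) / (1 - c)) *\<^sub>R m) \<bullet> (((\<tau> k \<bullet> m) / (1 - c)) *\<^sub>R m)"
      by (simp only: power2_norm_eq_inner)
    also have "\<dots> = ((\<tau> k \<bullet> m) / (1 - c))^2 * (m \<bullet> m)"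
      by (simp only: inner_scaleR_left inner_scaleR_right power2_eq_square mult.assoc)
    also have "\<dots> = 2 * (e \<bullet> \<tau> k)\<^sup>2 / (1 - c)"
    proof -
      have k0: "1 - c \<noteq> 0" using c1 by simp
      show ?thesis unfolding mm tm using k0 by (simp add: power2_eq_square divide_simps)
    qed
    also have "\<dots> \<le> 2 * (e \<bullet> \<tau> k)\<^sup>2" using c1 by (simp add: divide_le_eq mult_le_cancel_left1 mult_le_cancel_left)
    finally show "(norm (\<tau> k - \<sigma> k))\<^sup>2 \<le> 2 * (e \<bullet> \<tau> k)\<^sup>2" .
  qed
qed



lemma line_deriv:
  fixes g :: "'a::real_normed_vector \<Rightarrow> 'b::real_normed_vector"
  assumes "g differentiable (at (x0 + s *\<^sub>R b))"
  shows "((\<lambda>s. g (x0 + s *\<^sub>R b)) has_vector_derivative dirD b g (x0 + s *\<^sub>R b)) (at s)"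
    and "dirD b g (x0 + s *\<^sub>R b) = frechet_derivative g (at (x0 + s *\<^sub>R b)) b"
proof -
  let ?F = "frechet_derivative g (at (x0 + s *\<^sub>R b))"
  have F: "(g has_derivative ?F) (at (x0 + s *\<^sub>R b))" using assms frechet_derivative_works by blast
  have lin: "linear ?F" using F has_derivative_linear by blast
  have gen: "((\<lambda>r. g (y + r *\<^sub>R b)) has_vector_derivative ?F b) (at r)" if "y + r *\<^sub>R b = x0 + s *\<^sub>R b" for y r
  proof -
    have l: "((\<lambda>r. y + r *\<^sub>R b) has_derivative (\<lambda>r. r *\<^sub>R b)) (at r)"
      by (auto intro!: derivative_eq_intros)
    have "((\<lambda>r. g (y + r *\<^sub>R b)) has_derivative (\<lambda>r. ?F (r *\<^sub>R b))) (at r)"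
      using has_derivative_compose[OF l, of g ?F] F that by simp
    then show ?thesis unfolding has_vector_derivative_def
      using lin by (simp add: linear_scale)
  qed
  have "((\<lambda>r. g ((x0 + s *\<^sub>R b) + r *\<^sub>R b)) has_vector_derivative ?F b) (at 0)"
    by (rule gen) simp
  then have "dirD b g (x0 + s *\<^sub>R b) = ?F b" unfolding dirD_def by (rule vector_derivative_at)
  then show "dirD b g (x0 + s *\<^sub>R b) = ?F b" .
  then show "((\<lambda>s. g (x0 + s *\<^sub>R b)) has_vector_derivative dirD b g (x0 + s *\<^sub>R b)) (at s)"
    using gen[of x0 s] by simp
qed

lemma dirD_at:
  fixes g :: "'a::real_normed_vector \<Rightarrow> 'b::real_normed_vector"
  assumes "g differentiable (at x)"
  shows "dirD b g x = frechet_derivative g (at x) b"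
  using line_deriv(2)[of g x 0 b] assms by simp

lemma sum_axis_vec: "(\<Sum>j\<in>UNIV. (\<alpha>::real^'n::finite) $ j *\<^sub>R axis j (1::real)) = \<alpha>"
  by (simp add: vec_eq_iff axis_def if_distrib sum.delta cong: if_cong)

lemma dirD_u_lin:
  fixes g :: "(real^'n::finite) \<times> real \<Rightarrow> 'b::real_normed_vector"
  assumes "g differentiable (at x)"
  shows "dirD (\<alpha>, 0) g x = (\<Sum>j\<in>UNIV. \<alpha> $ j *\<^sub>R Du j g x)"
proof -
  let ?F = "frechet_derivative g (at x)"
  have lin: "linear ?F" using assms frechet_derivative_works has_derivative_linear by blast
  have "(\<alpha>, 0::real) = (\<Sum>j\<in>UNIV. \<alpha> $ j *\<^sub>R (axis j 1, 0::real))"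
    by (simp add: sum_prod sum_axis_vec)
  then have "?F (\<alpha>, 0) = (\<Sum>j\<in>UNIV. ?F (\<alpha> $ j *\<^sub>R (axis j 1, 0::real)))"
    using linear_sum[OF lin] by (simp only: o_def)
  also have "\<dots> = (\<Sum>j\<in>UNIV. \<alpha> $ j *\<^sub>R ?F (axis j 1, 0))"
    by (rule sum.cong[OF refl]) (rule linear_scale[OF lin])
  finally have "?F (\<alpha>, 0) = (\<Sum>j\<in>UNIV. \<alpha> $ j *\<^sub>R ?F (axis j 1, 0))" .
  then show ?thesis using dirD_at[OF assms] unfolding Du_def by simp
qed

lemma basis_u: "((axis j 1)::real^'n::finite, 0::real) \<in> Basis"
  unfolding Basis_prod_def by (rule UnI1, rule image_eqI[OF refl]) simp

lemma basis_t: "(0::real^'n::finite, 1::real) \<in> Basis"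
  unfolding Basis_prod_def by (rule UnI2, rule image_eqI[OF refl]) simp

lemma pz: "(0::real^'n::finite, 0::real) = 0" by (simp add: zero_prod_def)

lemma C2_facts:
  fixes g :: "(real^'n::finite) \<times> real \<Rightarrow> 'b::real_normed_vector"
  assumes "Ck 2 S g" "x \<in> S"
  shows "g differentiable (at x)" "(\<lambda>q. Du j g q) differentiable (at x)"
    "continuous_on S (\<lambda>q. Du j g q)"
proof -
  have c2: "Ck (Suc (Suc 0)) S g" using assms(1) by (simp add: numeral_2_eq_2)
  then show "g differentiable (at x)" using assms(2) by simp
  have "Ck (Suc 0) S (dirD (axis j 1, 0) g)" using c2 basis_u[of j] by simp
  then have "(dirD (axis j 1, 0) g) differentiable (at x)" "continuous_on S (dirD (axis j 1, 0) g)"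
    using assms(2) by auto
  moreover have "(\<lambda>q. Du j g q) = dirD (axis j 1, 0) g" unfolding Du_def by (rule ext) simp
  ultimately show "(\<lambda>q. Du j g q) differentiable (at x)" "continuous_on S (\<lambda>q. Du j g q)" by simp_all
qed

lemma C2_line1:
  fixes g :: "(real^'n::finite) \<times> real \<Rightarrow> 'b::real_normed_vector"
  assumes "Ck 2 S g" "p + s *\<^sub>R (\<alpha>, 0) \<in> S"
  shows "((\<lambda>s. g (p + s *\<^sub>R (\<alpha>, 0))) has_vector_derivative
           (\<Sum>j\<in>UNIV. \<alpha> $ j *\<^sub>R Du j g (p + s *\<^sub>R (\<alpha>, 0)))) (at s)"
proof -
  have d: "g differentiable (at (p + s *\<^sub>R (\<alpha>, 0)))" using C2_facts[OF assms] by blast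
  show ?thesis using line_deriv(1)[OF d] dirD_u_lin[OF d] by simp
qed

lemma C2_line2:
  fixes g :: "(real^'n::finite) \<times> real \<Rightarrow> 'b::real_normed_vector"
  assumes "Ck 2 S g" "p \<in> S"
  shows "((\<lambda>s. (\<Sum>j\<in>UNIV. \<alpha> $ j *\<^sub>R Du j g (p + s *\<^sub>R (\<alpha>, 0)))) has_vector_derivative
           (\<Sum>j\<in>UNIV. \<alpha> $ j *\<^sub>R (\<Sum>i\<in>UNIV. \<alpha> $ i *\<^sub>R Du i (\<lambda>q. Du j g q) p))) (at 0)"
proof -
  have "((\<lambda>s. Du j g (p + s *\<^sub>R (\<alpha>, 0))) has_vector_derivative
           (\<Sum>i\<in>UNIV. \<alpha> $ i *\<^sub>R Du i (\<lambda>q. Du j g q) p)) (at 0)" for j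
  proof -
    have d: "(\<lambda>q. Du j g q) differentiable (at (p + 0 *\<^sub>R (\<alpha>, 0)))"
    proof -
      have "p + 0 *\<^sub>R (\<alpha>, 0::real) = p" by (simp only: scaleR_zero_left add_0_right)
      then show ?thesis using C2_facts(2)[OF assms] by simp
    qed
    show ?thesis using line_deriv(1)[OF d] dirD_u_lin[OF d] by (simp add: pz)
  qed
  then show ?thesis
    by (intro has_vector_derivative_sum bounded_linear.has_vector_derivative[OF bounded_linear_scaleR_right])
qed

lemma C2_linet:
  fixes g :: "(real^'n::finite) \<times> real \<Rightarrow> 'b::real_normed_vector"
  assumes "Ck 2 S g" "(u, t) \<in> S"
  shows "((\<lambda>t. g (u, t)) has_vector_derivative Dt g (u, t)) (at t)"
proof -
  have e: "(u, t) = (u, 0) + t *\<^sub>R (0::real^'n, 1::real)" by simp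
  have d: "g differentiable (at ((u, 0) + t *\<^sub>R (0::real^'n, 1::real)))" using C2_facts(1)[OF assms] e by metis
  have "(\<lambda>t. g (u, t)) = (\<lambda>t. g ((u, 0) + t *\<^sub>R (0::real^'n, 1::real)))" by (rule ext) simp
  then show ?thesis using line_deriv(1)[OF d] e unfolding Dt_def by metis
qed



lemma psi_1d:
  fixes m q K :: "real \<Rightarrow> real"
  assumes m: "(m has_real_derivative m1) (at s)" and q: "(q has_real_derivative q1) (at s)"
    and K: "(K has_real_derivative K1) (at s)" and qpos: "q s > 0"
  shows "((\<lambda>s. exp (c1 + c2 * (m s + K s)) / sqrt (q s)) has_real_derivative
          (exp (c1 + c2 * (m s + K s)) / sqrt (q s)) * (c2 * (m1 + K1) - q1 / (2 * q s))) (at s)"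
proof -
  have sq: "sqrt (q s) > 0" using qpos by simp
  have "((\<lambda>s. exp (c1 + c2 * (m s + K s)) / sqrt (q s)) has_real_derivative
     ((exp (c1 + c2 * (m s + K s)) * (c2 * (m1 + K1))) * sqrt (q s) - exp (c1 + c2 * (m s + K s)) * (q1 * inverse (sqrt (q s)) / 2))
      / (sqrt (q s) * sqrt (q s))) (at s)"
    using qpos by (auto intro!: derivative_eq_intros m q K)
  moreover have "((exp (c1 + c2 * (m s + K s)) * (c2 * (m1 + K1))) * sqrt (q s) - exp (c1 + c2 * (m s + K s)) * (q1 * inverse (sqrt (q s)) / 2))
      / (sqrt (q s) * sqrt (q s)) = (exp (c1 + c2 * (m s + K s)) / sqrt (q s)) * (c2 * (m1 + K1) - q1 / (2 * q s))"
  proof -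
    have sqq: "sqrt (q s) * (sqrt (q s) * z) = q s * z" for z
      using qpos by (simp add: mult.assoc[symmetric])
    show ?thesis using sq qpos by (simp add: field_simps sqq)
  qed
  ultimately show ?thesis by simp
qed

lemma psi_2d:
  fixes m1f q1f q P :: "real \<Rightarrow> real"
  assumes P: "(P has_real_derivative P0 * L0) (at 0)"
    and m1: "(m1f has_real_derivative m2) (at 0)" and q1: "(q1f has_real_derivative q2) (at 0)"
    and q: "(q has_real_derivative q1f 0) (at 0)" and qpos: "q 0 > 0"
    and L0: "L0 = c2 * m1f 0 - q1f 0 / (2 * q 0)" and P00: "P 0 = P0"
  shows "((\<lambda>s. P s * (c2 * m1f s - q1f s / (2 * q s))) has_real_derivative
          P0 * (L0\<^sup>2 + c2 * m2 - q2 / (2 * q 0) + (q1f 0)\<^sup>2 / (2 * (q 0)\<^sup>2))) (at 0)"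
proof -
  have "((\<lambda>s. P s * (c2 * m1f s - q1f s / (2 * q s))) has_real_derivative
      (P0 * L0) * (c2 * m1f 0 - q1f 0 / (2 * q 0)) + P 0 * (c2 * m2 - (q2 * (2 * q 0) - q1f 0 * (2 * q1f 0)) / ((2 * q 0) * (2 * q 0)))) (at 0)"
    using qpos by (auto intro!: derivative_eq_intros P m1 q1 q)
  moreover have "(P0 * L0) * (c2 * m1f 0 - q1f 0 / (2 * q 0)) + P 0 * (c2 * m2 - (q2 * (2 * q 0) - q1f 0 * (2 * q1f 0)) / ((2 * q 0) * (2 * q 0)))
      = P0 * (L0\<^sup>2 + c2 * m2 - q2 / (2 * q 0) + (q1f 0)\<^sup>2 / (2 * (q 0)\<^sup>2))"
    using qpos unfolding L0[symmetric] P00 by (simp add: field_simps power2_eq_square)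
  ultimately show ?thesis by simp
qed



lemma second_order_min:
  fixes k k1 :: "real \<Rightarrow> real"
  assumes d0: "\<delta> > 0" and kd: "\<And>s. \<bar>s\<bar> < \<delta> \<Longrightarrow> (k has_real_derivative k1 s) (at s)"
    and k1d: "(k1 has_real_derivative D) (at 0)"
    and mn: "\<And>s. \<bar>s\<bar> < \<delta> \<Longrightarrow> k 0 \<le> k s"
  shows "k1 0 = 0" "D \<ge> 0"
proof -
  show k10: "k1 0 = 0"
    by (rule DERIV_local_min[OF kd[of 0] d0]) (use d0 mn in auto)
  show "D \<ge> 0"
  proof (rule ccontr)
    assume "\<not> D \<ge> 0"
    then have "D < 0" by simp
    from DERIV_neg_dec_right[OF k1d this] obtain d where d: "d > 0" "\<And>h. h > 0 \<Longrightarrow> h < d \<Longrightarrow> k1 0 > k1 (0 + h)"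
      by blast
    define h0 where "h0 = min d \<delta> / 2"
    have h0: "h0 > 0" "h0 < d" "h0 < \<delta>" using d d0 unfolding h0_def by auto
    obtain z where z: "0 < z" "z < h0" "k h0 - k 0 = (h0 - 0) * k1 z"
      using MVT2[of 0 h0 k k1] h0 kd by force
    have "k1 z < 0" using d(2)[of z] z h0 k10 by simp
    then have "h0 * k1 z < 0" using h0 by (simp add: mult_pos_neg)
    then have "k h0 < k 0" using z by simp
    moreover have "k 0 \<le> k h0" using mn[of h0] h0 by simp
    ultimately show False by simp
  qed
qed

lemma left_min:
  fixes h :: "real \<Rightarrow> real"
  assumes hd: "(h has_real_derivative D) (at t0)" and d0: "\<delta> > 0"
    and mn: "\<And>t. t0 - \<delta> < t \<Longrightarrow> t \<le> t0 \<Longrightarrow> h t0 \<le> h t"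
  shows "D \<le> 0"
proof (rule ccontr)
  assume "\<not> D \<le> 0"
  then have "D > 0" by simp
  from DERIV_pos_inc_left[OF hd this] obtain d where d: "d > 0" "\<And>e. e > 0 \<Longrightarrow> e < d \<Longrightarrow> h (t0 - e) < h t0"
    by blast
  define e where "e = min d \<delta> / 2"
  have "e > 0" "e < d" "e < \<delta>" using d d0 unfolding e_def by auto
  then have "h (t0 - e) < h t0" "h t0 \<le> h (t0 - e)" using d(2) mn[of "t0 - e"] by auto
  then show False by simp
qed



lemma nbhd_line:
  fixes p h :: "'a::real_normed_vector"
  assumes "open S" "p \<in> S"
  shows "\<exists>\<delta>>0. \<forall>s. \<bar>s\<bar> < \<delta> \<longrightarrow> p + s *\<^sub>R h \<in> S"
proof -
  obtain e where e: "e > 0" "ball p e \<subseteq> S" using assms open_contains_ball by blast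
  define \<delta> where "\<delta> = e / (norm h + 1)"
  have hp: "norm h + 1 > 0" by (simp add: add_nonneg_pos)
  have d: "\<delta> > 0" unfolding \<delta>_def using e hp by simp
  have "p + s *\<^sub>R h \<in> S" if s: "\<bar>s\<bar> < \<delta>" for s
  proof -
    have "norm (s *\<^sub>R h) = \<bar>s\<bar> * norm h" by simp
    also have "\<dots> \<le> \<bar>s\<bar> * (norm h + 1)" by (simp add: mult_left_mono)
    also have "\<dots> < \<delta> * (norm h + 1)" using s hp by (intro mult_strict_right_mono) auto
    also have "\<dots> = e" unfolding \<delta>_def using hp by simp
    finally have "dist p (p + s *\<^sub>R h) < e" by (simp add: dist_norm)
    then show ?thesis using e by auto
  qed
  then show ?thesis using d by blast
qed

lemma inner_deriv:
  fixes f g :: "real \<Rightarrow> 'a::real_inner"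
  assumes "(f has_vector_derivative f') (at s)" "(g has_vector_derivative g') (at s)"
  shows "((\<lambda>s. f s \<bullet> g s) has_real_derivative (f s \<bullet> g' + f' \<bullet> g s)) (at s)"
  using bounded_bilinear.has_vector_derivative[OF bounded_bilinear_inner assms]
  by (simp add: has_real_derivative_iff_has_vector_derivative)

lemma spatial:
  fixes Phi :: "(real^'n::finite) \<times> real \<Rightarrow> real"
    and X Y :: "(real^'n) \<times> real \<Rightarrow> real^'N::finite"
  assumes Phi2: "Ck 2 W Phi" and X2: "Ck 2 W X" and oW: "open W" and p0W: "p0 \<in> W"
    and Y2: "Ck 2 Vs Y" and oV: "open Vs" and r0V: "r0 \<in> Vs"
    and low: "\<And>s. p0 + s *\<^sub>R (\<alpha>, 0) \<in> W \<Longrightarrow> r0 + s *\<^sub>R (\<beta>, 0) \<in> Vs \<Longrightarrow>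
         X (p0 + s *\<^sub>R (\<alpha>, 0)) \<noteq> Y (r0 + s *\<^sub>R (\<beta>, 0)) \<and>
         Phi (p0 + s *\<^sub>R (\<alpha>, 0)) \<ge> exp (c1 + c2 * ((norm (X (p0 + s *\<^sub>R (\<alpha>, 0)) - x0))\<^sup>2 + K))
             / norm (X (p0 + s *\<^sub>R (\<alpha>, 0)) - Y (r0 + s *\<^sub>R (\<beta>, 0)))"
    and eq: "Phi p0 = exp (c1 + c2 * ((norm (X p0 - x0))\<^sup>2 + K)) / norm (X p0 - Y r0)"
  defines "Xa \<equiv> (\<Sum>j\<in>UNIV. \<alpha> $ j *\<^sub>R Du j X p0)"
    and "Yb \<equiv> (\<Sum>j\<in>UNIV. \<beta> $ j *\<^sub>R Du j Y r0)"
    and "Xaa \<equiv> (\<Sum>j\<in>UNIV. \<alpha> $ j *\<^sub>R (\<Sum>i\<in>UNIV. \<alpha> $ i *\<^sub>R Du i (\<lambda>q. Du j X q) p0))"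
    and "Ybb \<equiv> (\<Sum>j\<in>UNIV. \<beta> $ j *\<^sub>R (\<Sum>i\<in>UNIV. \<beta> $ i *\<^sub>R Du i (\<lambda>q. Du j Y q) r0))"
    and "w \<equiv> X p0 - Y r0" and "a \<equiv> X p0 - x0"
  assumes L_def: "L = c2 * (2 * (a \<bullet> Xa)) - 2 * (w \<bullet> (Xa - Yb)) / (2 * (w \<bullet> w))"
  shows "(\<Sum>j\<in>UNIV. \<alpha> $ j * Du j Phi p0) = Phi p0 * L"
    and "(\<Sum>j\<in>UNIV. \<alpha> $ j * (\<Sum>i\<in>UNIV. \<alpha> $ i * Du i (\<lambda>q. Du j Phi q) p0)) \<ge>
         Phi p0 * (L\<^sup>2 + c2 * (2 * (a \<bullet> Xaa + Xa \<bullet> Xa))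
           - 2 * (w \<bullet> (Xaa - Ybb) + (Xa - Yb) \<bullet> (Xa - Yb)) / (2 * (w \<bullet> w))
           + (2 * (w \<bullet> (Xa - Yb)))\<^sup>2 / (2 * (w \<bullet> w)\<^sup>2))"
proof -
  obtain \<delta>1 where d1: "\<delta>1 > 0" "\<And>s. \<bar>s\<bar> < \<delta>1 \<Longrightarrow> p0 + s *\<^sub>R (\<alpha>, 0::real) \<in> W"
    using nbhd_line[OF oW p0W] by blast
  obtain \<delta>2 where d2: "\<delta>2 > 0" "\<And>s. \<bar>s\<bar> < \<delta>2 \<Longrightarrow> r0 + s *\<^sub>R (\<beta>, 0::real) \<in> Vs"
    using nbhd_line[OF oV r0V] by blast
  define \<delta> where "\<delta> = min \<delta>1 \<delta>2"
  have d: "\<delta> > 0" using d1 d2 unfolding \<delta>_def by simp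
  have inW: "p0 + s *\<^sub>R (\<alpha>, 0) \<in> W" and inV: "r0 + s *\<^sub>R (\<beta>, 0) \<in> Vs" if "\<bar>s\<bar> < \<delta>" for s
    using d1 d2 that unfolding \<delta>_def by auto
  define xs where "xs = (\<lambda>s. X (p0 + s *\<^sub>R (\<alpha>, 0)))"
  define ys where "ys = (\<lambda>s. Y (r0 + s *\<^sub>R (\<beta>, 0)))"
  define ps where "ps = (\<lambda>s. Phi (p0 + s *\<^sub>R (\<alpha>, 0)))"
  define x1 where "x1 = (\<lambda>s. \<Sum>j\<in>UNIV. \<alpha> $ j *\<^sub>R Du j X (p0 + s *\<^sub>R (\<alpha>, 0)))"
  define y1 where "y1 = (\<lambda>s. \<Sum>j\<in>UNIV. \<beta> $ j *\<^sub>R Du j Y (r0 + s *\<^sub>R (\<beta>, 0)))"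
  define p1 where "p1 = (\<lambda>s. \<Sum>j\<in>UNIV. \<alpha> $ j *\<^sub>R Du j Phi (p0 + s *\<^sub>R (\<alpha>, 0)))"
  define p2 where "p2 = (\<Sum>j\<in>UNIV. \<alpha> $ j *\<^sub>R (\<Sum>i\<in>UNIV. \<alpha> $ i *\<^sub>R Du i (\<lambda>q. Du j Phi q) p0))"
  have z: "p0 + 0 *\<^sub>R (\<alpha>, 0::real) = p0" "r0 + 0 *\<^sub>R (\<beta>, 0::real) = r0" by (simp_all add: pz)
  have xs0: "xs 0 = X p0" and ys0: "ys 0 = Y r0" and ps0: "ps 0 = Phi p0"
    and x10: "x1 0 = Xa" and y10: "y1 0 = Yb" and p10: "p1 0 = (\<Sum>j\<in>UNIV. \<alpha> $ j * Du j Phi p0)"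
    unfolding xs_def ys_def ps_def x1_def y1_def p1_def Xa_def Yb_def z by simp_all
  have xd: "(xs has_vector_derivative x1 s) (at s)" and yd: "(ys has_vector_derivative y1 s) (at s)"
    and pd: "(ps has_real_derivative p1 s) (at s)" if "\<bar>s\<bar> < \<delta>" for s
    using C2_line1[OF X2 inW[OF that]] C2_line1[OF Y2 inV[OF that]] C2_line1[OF Phi2 inW[OF that]]
    unfolding xs_def ys_def ps_def x1_def y1_def p1_def
    by (simp_all add: has_real_derivative_iff_has_vector_derivative)
  have x1d: "(x1 has_vector_derivative Xaa) (at 0)" and y1d: "(y1 has_vector_derivative Ybb) (at 0)"
    and p1d: "(p1 has_real_derivative p2) (at 0)"
    using C2_line2[OF X2 p0W, of \<alpha>] C2_line2[OF Y2 r0V, of \<beta>] C2_line2[OF Phi2 p0W, of \<alpha>]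
    unfolding x1_def y1_def p1_def Xaa_def Ybb_def p2_def
    by (simp_all add: has_real_derivative_iff_has_vector_derivative)
  define m where "m = (\<lambda>s. (xs s - x0) \<bullet> (xs s - x0))"
  define q where "q = (\<lambda>s. (xs s - ys s) \<bullet> (xs s - ys s))"
  define m1 where "m1 = (\<lambda>s. 2 * ((xs s - x0) \<bullet> x1 s))"
  define q1 where "q1 = (\<lambda>s. 2 * ((xs s - ys s) \<bullet> (x1 s - y1 s)))"
  have md: "(m has_real_derivative m1 s) (at s)" and qd: "(q has_real_derivative q1 s) (at s)"
    if "\<bar>s\<bar> < \<delta>" for s
  proof -
    have a: "((\<lambda>s. xs s - x0) has_vector_derivative x1 s) (at s)"
      using xd[OF that] by (intro derivative_eq_intros) auto
    have b: "((\<lambda>s. xs s - ys s) has_vector_derivative (x1 s - y1 s)) (at s)"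
      using xd[OF that] yd[OF that] by (intro derivative_eq_intros) auto
    show "(m has_real_derivative m1 s) (at s)"
      using inner_deriv[OF a a] unfolding m_def m1_def by (simp add: inner_commute)
    show "(q has_real_derivative q1 s) (at s)"
      using inner_deriv[OF b b] unfolding q_def q1_def by (simp add: inner_commute)
  qed
  have m1d: "(m1 has_real_derivative 2 * (a \<bullet> Xaa + Xa \<bullet> Xa)) (at 0)"
  proof -
    have a': "((\<lambda>s. xs s - x0) has_vector_derivative x1 0) (at 0)"
      using xd[of 0] d by (intro derivative_eq_intros) auto
    show ?thesis using DERIV_cmult[OF inner_deriv[OF a' x1d], of 2] unfolding m1_def
      by (simp add: xs0 x10 a_def)
  qed
  have q1d: "(q1 has_real_derivative 2 * (w \<bullet> (Xaa - Ybb) + (Xa - Yb) \<bullet> (Xa - Yb))) (at 0)"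
  proof -
    have b': "((\<lambda>s. xs s - ys s) has_vector_derivative (x1 0 - y1 0)) (at 0)"
      using xd[of 0] yd[of 0] d by (intro derivative_eq_intros) auto
    have c': "((\<lambda>s. x1 s - y1 s) has_vector_derivative (Xaa - Ybb)) (at 0)"
      using x1d y1d by (intro derivative_eq_intros) auto
    show ?thesis using DERIV_cmult[OF inner_deriv[OF b' c'], of 2] unfolding q1_def
      by (simp add: xs0 ys0 x10 y10 w_def)
  qed
  have qpos: "q s > 0" if "\<bar>s\<bar> < \<delta>" for s
    using low[OF inW[OF that] inV[OF that]] unfolding q_def xs_def ys_def by simp
  define Psi where "Psi = (\<lambda>s. exp (c1 + c2 * (m s + K)) / sqrt (q s))"
  have Psid: "(Psi has_real_derivative Psi s * (c2 * m1 s - q1 s / (2 * q s))) (at s)" if "\<bar>s\<bar> < \<delta>" for s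
    using psi_1d[OF md[OF that] qd[OF that] DERIV_const qpos[OF that], of c1 c2 K] unfolding Psi_def
    by simp
  have Psieq: "Psi s = exp (c1 + c2 * ((norm (xs s - x0))\<^sup>2 + K)) / norm (xs s - ys s)" for s
    unfolding Psi_def m_def q_def by (simp add: power2_norm_eq_inner norm_eq_sqrt_inner)
  have Psi0: "Psi 0 = Phi p0" using eq Psieq[of 0] xs0 ys0 by simp
  define k where "k = (\<lambda>s. ps s - Psi s)"
  define k1 where "k1 = (\<lambda>s. p1 s - Psi s * (c2 * m1 s - q1 s / (2 * q s)))"
  have kd: "(k has_real_derivative k1 s) (at s)" if "\<bar>s\<bar> < \<delta>" for s
    unfolding k_def k1_def using pd[OF that] Psid[OF that] by (rule DERIV_diff)
  have L0: "L = c2 * m1 0 - q1 0 / (2 * q 0)"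
    unfolding L_def m1_def q1_def q_def using xs0 ys0 x10 y10 by (simp add: a_def w_def)
  have k1d: "(k1 has_real_derivative p2 - Phi p0 * (L\<^sup>2 + c2 * (2 * (a \<bullet> Xaa + Xa \<bullet> Xa))
           - 2 * (w \<bullet> (Xaa - Ybb) + (Xa - Yb) \<bullet> (Xa - Yb)) / (2 * q 0)
           + (q1 0)\<^sup>2 / (2 * (q 0)\<^sup>2))) (at 0)"
    unfolding k1_def
  proof (rule DERIV_diff[OF p1d psi_2d])
    show "(Psi has_real_derivative Phi p0 * L) (at 0)" using Psid[of 0] d Psi0 L0 by simp
    show "(q has_real_derivative q1 0) (at 0)" using qd[of 0] d by simp
  qed (use m1d q1d qpos[of 0] d L0 Psi0 in auto)
  have kmin: "k 0 \<le> k s" if "\<bar>s\<bar> < \<delta>" for s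
  proof -
    have "k 0 = 0" unfolding k_def using ps0 Psi0 by simp
    moreover have "ps s \<ge> Psi s" using low[OF inW[OF that] inV[OF that]] Psieq[of s]
      unfolding ps_def xs_def ys_def by simp
    ultimately show ?thesis unfolding k_def by simp
  qed
  have so: "k1 0 = 0" "p2 - Phi p0 * (L\<^sup>2 + c2 * (2 * (a \<bullet> Xaa + Xa \<bullet> Xa))
           - 2 * (w \<bullet> (Xaa - Ybb) + (Xa - Yb) \<bullet> (Xa - Yb)) / (2 * q 0)
           + (q1 0)\<^sup>2 / (2 * (q 0)\<^sup>2)) \<ge> 0"
    using second_order_min[OF d kd k1d kmin] by auto
  have q0: "q 0 = w \<bullet> w" unfolding q_def w_def using xs0 ys0 by simp
  have q10: "q1 0 = 2 * (w \<bullet> (Xa - Yb))" unfolding q1_def w_def using xs0 ys0 x10 y10 by simp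
  show "(\<Sum>j\<in>UNIV. \<alpha> $ j * Du j Phi p0) = Phi p0 * L"
    using so(1) unfolding k1_def using p10 Psi0 L0 by simp
  show "(\<Sum>j\<in>UNIV. \<alpha> $ j * (\<Sum>i\<in>UNIV. \<alpha> $ i * Du i (\<lambda>q. Du j Phi q) p0)) \<ge>
         Phi p0 * (L\<^sup>2 + c2 * (2 * (a \<bullet> Xaa + Xa \<bullet> Xa))
           - 2 * (w \<bullet> (Xaa - Ybb) + (Xa - Yb) \<bullet> (Xa - Yb)) / (2 * (w \<bullet> w))
           + (2 * (w \<bullet> (Xa - Yb)))\<^sup>2 / (2 * (w \<bullet> w)\<^sup>2))"
    using so(2) unfolding p2_def q0 q10 by simp
qed

lemma temporal:
  fixes Phi :: "(real^'n::finite) \<times> real \<Rightarrow> real"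
    and X Y :: "(real^'n) \<times> real \<Rightarrow> real^'N::finite"
  assumes Phi2: "Ck 2 W Phi" and X2: "Ck 2 W X" and oW: "open W" and p0W: "(u0, t0) \<in> W"
    and Y2: "Ck 2 Vs Y" and oV: "open Vs" and r0V: "(v0, t0) \<in> Vs"
    and low: "\<And>t. (u0, t) \<in> W \<Longrightarrow> (v0, t) \<in> Vs \<Longrightarrow> t \<le> t0 \<Longrightarrow>
         X (u0, t) \<noteq> Y (v0, t) \<and>
         Phi (u0, t) \<ge> exp (c1 + c2 * ((norm (X (u0, t) - x0))\<^sup>2 + \<kappa> * t)) / norm (X (u0, t) - Y (v0, t))"
    and eq: "Phi (u0, t0) = exp (c1 + c2 * ((norm (X (u0, t0) - x0))\<^sup>2 + \<kappa> * t0)) / norm (X (u0, t0) - Y (v0, t0))"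
  shows "Dt Phi (u0, t0) \<le> Phi (u0, t0) * (c2 * (2 * ((X (u0, t0) - x0) \<bullet> Dt X (u0, t0)) + \<kappa>)
           - 2 * ((X (u0, t0) - Y (v0, t0)) \<bullet> (Dt X (u0, t0) - Dt Y (v0, t0))) / (2 * ((X (u0, t0) - Y (v0, t0)) \<bullet> (X (u0, t0) - Y (v0, t0)))))"
proof -
  obtain \<delta>1 where d1: "\<delta>1 > 0" "\<And>s. \<bar>s\<bar> < \<delta>1 \<Longrightarrow> (u0, t0) + s *\<^sub>R (0, 1::real) \<in> W"
    using nbhd_line[OF oW p0W] by blast
  obtain \<delta>2 where d2: "\<delta>2 > 0" "\<And>s. \<bar>s\<bar> < \<delta>2 \<Longrightarrow> (v0, t0) + s *\<^sub>R (0, 1::real) \<in> Vs"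
    using nbhd_line[OF oV r0V] by blast
  define \<delta> where "\<delta> = min \<delta>1 \<delta>2"
  have d: "\<delta> > 0" using d1 d2 unfolding \<delta>_def by simp
  have inW: "(u0, t) \<in> W" and inV: "(v0, t) \<in> Vs" if "\<bar>t - t0\<bar> < \<delta>" for t
    using d1(2)[of "t - t0"] d2(2)[of "t - t0"] that unfolding \<delta>_def by auto
  define xs where "xs = (\<lambda>t. X (u0, t))"
  define ys where "ys = (\<lambda>t. Y (v0, t))"
  define ps where "ps = (\<lambda>t. Phi (u0, t))"
  have xd: "(xs has_vector_derivative Dt X (u0, t0)) (at t0)"
    unfolding xs_def by (rule C2_linet[OF X2 p0W])
  have yd: "(ys has_vector_derivative Dt Y (v0, t0)) (at t0)"
    unfolding ys_def by (rule C2_linet[OF Y2 r0V])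
  have pd: "(ps has_real_derivative Dt Phi (u0, t0)) (at t0)"
    using C2_linet[OF Phi2 p0W] unfolding ps_def by (simp add: has_real_derivative_iff_has_vector_derivative)
  define m where "m = (\<lambda>s. (xs s - x0) \<bullet> (xs s - x0))"
  define q where "q = (\<lambda>s. (xs s - ys s) \<bullet> (xs s - ys s))"
  have a: "((\<lambda>s. xs s - x0) has_vector_derivative Dt X (u0, t0)) (at t0)"
    using xd by (intro derivative_eq_intros) auto
  have b: "((\<lambda>s. xs s - ys s) has_vector_derivative (Dt X (u0, t0) - Dt Y (v0, t0))) (at t0)"
    using xd yd by (intro derivative_eq_intros) auto
  have md: "(m has_real_derivative 2 * ((xs t0 - x0) \<bullet> Dt X (u0, t0))) (at t0)"
    using inner_deriv[OF a a] unfolding m_def by (simp add: inner_commute)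
  have qd: "(q has_real_derivative 2 * ((xs t0 - ys t0) \<bullet> (Dt X (u0, t0) - Dt Y (v0, t0)))) (at t0)"
    using inner_deriv[OF b b] unfolding q_def by (simp add: inner_commute)
  have qpos: "q t0 > 0" using low[OF p0W r0V] unfolding q_def xs_def ys_def by simp
  have Kd: "((\<lambda>t. \<kappa> * t) has_real_derivative \<kappa>) (at t0)" by (auto intro!: derivative_eq_intros)
  define Psi where "Psi = (\<lambda>s. exp (c1 + c2 * (m s + \<kappa> * s)) / sqrt (q s))"
  have Psid: "(Psi has_real_derivative Psi t0 * (c2 * (2 * ((xs t0 - x0) \<bullet> Dt X (u0, t0)) + \<kappa>)
      - 2 * ((xs t0 - ys t0) \<bullet> (Dt X (u0, t0) - Dt Y (v0, t0))) / (2 * q t0))) (at t0)"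
    using psi_1d[OF md qd Kd qpos, of c1 c2] unfolding Psi_def by simp
  have Psieq: "Psi s = exp (c1 + c2 * ((norm (xs s - x0))\<^sup>2 + \<kappa> * s)) / norm (xs s - ys s)" for s
    unfolding Psi_def m_def q_def by (simp add: power2_norm_eq_inner norm_eq_sqrt_inner)
  have Psi0: "Psi t0 = Phi (u0, t0)" using eq Psieq[of t0] unfolding xs_def ys_def by simp
  define h where "h = (\<lambda>t. ps t - Psi t)"
  have hd: "(h has_real_derivative Dt Phi (u0, t0) - Psi t0 * (c2 * (2 * ((xs t0 - x0) \<bullet> Dt X (u0, t0)) + \<kappa>)
      - 2 * ((xs t0 - ys t0) \<bullet> (Dt X (u0, t0) - Dt Y (v0, t0))) / (2 * q t0))) (at t0)"
    unfolding h_def by (rule DERIV_diff[OF pd Psid])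
  have hmin: "h t0 \<le> h t" if "t0 - \<delta> < t" "t \<le> t0" for t
  proof -
    have tt: "\<bar>t - t0\<bar> < \<delta>" using that by simp
    have "h t0 = 0" unfolding h_def ps_def using Psi0 by simp
    moreover have "ps t \<ge> Psi t" using low[OF inW[OF tt] inV[OF tt] that(2)] Psieq[of t]
      unfolding ps_def xs_def ys_def by simp
    ultimately show ?thesis unfolding h_def by simp
  qed
  have "Dt Phi (u0, t0) - Psi t0 * (c2 * (2 * ((xs t0 - x0) \<bullet> Dt X (u0, t0)) + \<kappa>)
      - 2 * ((xs t0 - ys t0) \<bullet> (Dt X (u0, t0) - Dt Y (v0, t0))) / (2 * q t0)) \<le> 0"
    by (rule left_min[OF hd d hmin])
  then show ?thesis using Psi0 unfolding q_def xs_def ys_def by simp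
qed



lemma G_cont:
  fixes B :: "((real^'n::finite) set \<times> (real^'n \<Rightarrow> 'q::topological_space)) set"
    and G :: "'q \<Rightarrow> real \<Rightarrow> real^'N::finite"
  assumes atl: "smooth_atlas B"
    and cB: "\<forall>(V,\<rho>)\<in>B. continuous_on (V \<times> I) (\<lambda>(v,t). G (\<rho> v) t)"
    and tI: "t \<in> I"
  shows "continuous_on UNIV (\<lambda>q. G q t)"
proof -
  have "((\<lambda>q. G q t) \<longlongrightarrow> G q t) (at q)" for q
  proof -
  have "q \<in> (\<Union>(V,\<rho>)\<in>B. \<rho> ` V)" using atl unfolding smooth_atlas_def by simp
  then obtain V \<rho> where VB: "(V, \<rho>) \<in> B" and qV: "q \<in> \<rho> ` V" by blast
  have opn: "open (\<rho> ` V)" and "\<exists>\<phi>. homeomorphism V (\<rho> ` V) \<rho> \<phi>"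
    using atl VB unfolding smooth_atlas_def by auto
  then obtain \<phi> where hom: "homeomorphism V (\<rho> ` V) \<rho> \<phi>" by blast
  have phc: "continuous_on (\<rho> ` V) \<phi>" and phV: "\<phi> ` (\<rho> ` V) \<subseteq> V" and rp: "\<And>y. y \<in> \<rho> ` V \<Longrightarrow> \<rho> (\<phi> y) = y"
    using hom unfolding homeomorphism_def by auto
  have c1: "continuous_on (\<rho> ` V) (\<lambda>y. (\<phi> y, t))"
    by (intro continuous_on_Pair phc continuous_on_const)
  have c2: "continuous_on (V \<times> I) (\<lambda>(v,t). G (\<rho> v) t)" using cB VB by auto
  have "continuous_on (\<rho> ` V) ((\<lambda>(v,t). G (\<rho> v) t) \<circ> (\<lambda>y. (\<phi> y, t)))"
    by (rule continuous_on_compose[OF c1 continuous_on_subset[OF c2]]) (use phV tI in auto)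
  then have "continuous_on (\<rho> ` V) (\<lambda>y. G y t)"
    by (rule continuous_on_eq) (use rp in auto)
  then have "((\<lambda>y. G y t) \<longlongrightarrow> G q t) (at q within \<rho> ` V)"
    using qV unfolding continuous_on_def by blast
  then show "((\<lambda>q. G q t) \<longlongrightarrow> G q t) (at q)" using at_within_open[OF qV opn] by simp
  qed
  then show ?thesis unfolding continuous_on_def by simp
qed

lemma range_closed:
  fixes G :: "'q::topological_space \<Rightarrow> real \<Rightarrow> real^'N::finite"
  assumes cont: "continuous_on UNIV (\<lambda>q. G q t)" and pr: "proper_fun (\<lambda>q. G q t)"
  shows "closed (range (\<lambda>q. G q t))"
proof -
  let ?S = "range (\<lambda>q. G q t)"
  have "closure ?S \<subseteq> ?S"
  proof
    fix x assume x: "x \<in> closure ?S"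
    let ?C = "(\<lambda>q. G q t) -` cball x 1"
    have "compact ?C" using pr unfolding proper_fun_def by simp
    then have "compact ((\<lambda>q. G q t) ` ?C)"
      by (rule compact_continuous_image[OF continuous_on_subset[OF cont], rotated]) simp
    then have cl: "closed ((\<lambda>q. G q t) ` ?C)" by (rule compact_imp_closed)
    have "x \<in> closure ((\<lambda>q. G q t) ` ?C)"
      unfolding closure_approachable
    proof (intro allI impI)
      fix e :: real assume e: "e > 0"
      obtain y where "y \<in> ?S" "dist y x < min e 1"
        using x e unfolding closure_approachable by (meson less_numeral_extra(1) min_less_iff_conj)
      then show "\<exists>y\<in>(\<lambda>q. G q t) ` ?C. dist y x < e"
        by (auto simp: dist_commute)
    qed
    then have "x \<in> (\<lambda>q. G q t) ` ?C" using cl closure_closed by auto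
    then show "x \<in> ?S" by auto
  qed
  then show ?thesis using closure_subset_eq by blast
qed



lemma Ck_mono: "Ck k S f \<Longrightarrow> T \<subseteq> S \<Longrightarrow> Ck k T f"
proof (induction k arbitrary: f)
  case 0 then show ?case by (auto intro: continuous_on_subset)
next
  case (Suc k) then show ?case by (auto intro: continuous_on_subset)
qed

lemma smooth_Ck: "smooth_on S f \<Longrightarrow> Ck k S f"
  unfolding smooth_on_def by blast

lemma sum_axis_scale: "(\<Sum>j\<in>UNIV. (axis a (1::real)) $ j *\<^sub>R (Z j :: 'b::real_vector)) = Z a"
  by (simp add: axis_def if_distrib[where f="\<lambda>x. x *\<^sub>R _"] sum.delta cong: if_cong)

lemma trace_P:
  fixes M :: "'n::finite \<Rightarrow> 'n \<Rightarrow> 'b::real_vector"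
  shows "(\<Sum>k\<in>UNIV. \<Sum>j\<in>UNIV. P j k *\<^sub>R (\<Sum>i\<in>UNIV. P i k *\<^sub>R M i j))
       = (\<Sum>i\<in>UNIV. \<Sum>j\<in>UNIV. (\<Sum>k\<in>UNIV. P i k * P j k) *\<^sub>R M i j)"
proof -
  have "(\<Sum>k\<in>UNIV. \<Sum>j\<in>UNIV. P j k *\<^sub>R (\<Sum>i\<in>UNIV. P i k *\<^sub>R M i j))
      = (\<Sum>k\<in>UNIV. \<Sum>j\<in>UNIV. \<Sum>i\<in>UNIV. (P i k * P j k) *\<^sub>R M i j)"
    by (simp add: scaleR_sum_right mult.commute)
  also have "\<dots> = (\<Sum>j\<in>UNIV. \<Sum>i\<in>UNIV. \<Sum>k\<in>UNIV. (P i k * P j k) *\<^sub>R M i j)"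
    by (subst sum.swap, rule sum.cong[OF refl], rule sum.swap)
  also have "\<dots> = (\<Sum>i\<in>UNIV. \<Sum>j\<in>UNIV. \<Sum>k\<in>UNIV. (P i k * P j k) *\<^sub>R M i j)"
    by (rule sum.swap)
  also have "\<dots> = (\<Sum>i\<in>UNIV. \<Sum>j\<in>UNIV. (\<Sum>k\<in>UNIV. P i k * P j k) *\<^sub>R M i j)"
    by (simp add: scaleR_sum_left)
  finally show ?thesis .
qed

lemma sum_axis_mult: "(\<Sum>j\<in>UNIV. (axis a (1::real)) $ j * (Z j :: real)) = Z a"
  by (simp add: axis_def if_distrib[where f="\<lambda>x. x * _"] sum.delta cong: if_cong)

lemma sum3_decomp:
  fixes v :: "'n::finite \<Rightarrow> 'b::real_vector"
  shows "(\<Sum>i\<in>UNIV. \<Sum>j\<in>UNIV. (g i j::real) *\<^sub>R ((\<Sum>l\<in>UNIV. c i j l *\<^sub>R v l) + d i j *\<^sub>R n))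
     = (\<Sum>l\<in>UNIV. (\<Sum>i\<in>UNIV. \<Sum>j\<in>UNIV. g i j * c i j l) *\<^sub>R v l) + (\<Sum>i\<in>UNIV. \<Sum>j\<in>UNIV. g i j * d i j) *\<^sub>R n"
proof -
  have "(\<Sum>i\<in>UNIV. \<Sum>j\<in>UNIV. (g i j::real) *\<^sub>R ((\<Sum>l\<in>UNIV. c i j l *\<^sub>R v l) + d i j *\<^sub>R n))
     = (\<Sum>i\<in>UNIV. \<Sum>j\<in>UNIV. \<Sum>l\<in>UNIV. (g i j * c i j l) *\<^sub>R v l) + (\<Sum>i\<in>UNIV. \<Sum>j\<in>UNIV. (g i j * d i j) *\<^sub>R n)"
    by (simp add: scaleR_add_right sum.distrib scaleR_sum_right)
  also have "(\<Sum>i\<in>UNIV. \<Sum>j\<in>UNIV. \<Sum>l\<in>UNIV. (g i j * c i j l) *\<^sub>R v l) = (\<Sum>l\<in>UNIV. \<Sum>i\<in>UNIV. \<Sum>j\<in>UNIV. (g i j * c i j l) *\<^sub>R v l)"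
    by (subst sum.swap, rule sum.cong[OF refl], rule sum.swap)
  finally show ?thesis by (simp add: scaleR_sum_left)
qed

lemma main_local:
  fixes A :: "((real^'n::finite) set \<times> (real^'n \<Rightarrow> 'm::topological_space)) set"
    and F N :: "'m \<Rightarrow> real \<Rightarrow> real^'N::finite"
    and B :: "((real^'n) set \<times> (real^'n \<Rightarrow> 'q::topological_space)) set"
    and G NS :: "'q \<Rightarrow> real \<Rightarrow> real^'N"
    and I :: "real set" and c1 c2 :: real and x0 :: "real^'N"
    and d f :: "real^'N \<Rightarrow> real \<Rightarrow> real"
  assumes dim: "CARD('N) = CARD('n) + 1"
    and Gamma: "mcf A I F N"
    and Sigma: "mcf B I G NS"
    and proper: "\<forall>t\<in>I. proper_fun (\<lambda>q. G q t)"
    and disj: "\<forall>t\<in>I. range (\<lambda>p. F p t) \<inter> range (\<lambda>q. G q t) = {}"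
    and d_def: "d = (\<lambda>x t. infdist x (range (\<lambda>q. G q t)))"
    and f_def: "f = (\<lambda>x t. c1 + c2 * ((norm (x - x0))\<^sup>2 + 2 * real CARD('n) * t))"
    and UA: "(U, \<psi>) \<in> A" and u0U: "u0 \<in> U" and t0I: "t0 \<in> I"
    and oW: "open W" and p0W: "(u0, t0) \<in> W" and WUI: "W \<subseteq> U \<times> I"
    and Phi2: "Ck 2 W (\<lambda>(u,t). \<phi> (\<psi> u) t)"
    and above: "\<forall>(u,t)\<in>W. t \<le> t0 \<longrightarrow> \<phi> (\<psi> u) t \<ge> exp (f (F (\<psi> u) t) t) / d (F (\<psi> u) t) t"
    and touch: "\<phi> (\<psi> u0) t0 = exp (f (F (\<psi> u0) t0) t0) / d (F (\<psi> u0) t0) t0"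
  shows "heat_op (\<lambda>(u,t). F (\<psi> u) t) (\<lambda>(u,t). \<phi> (\<psi> u) t) (u0, t0) \<le> 0"
proof -
  define X where "X = (\<lambda>(u,t). F (\<psi> u) t)"
  define Phi where "Phi = (\<lambda>(u,t). \<phi> (\<psi> u) t)"
  define Nf where "Nf = (\<lambda>(u,t). N (\<psi> u) t)"
  have atlA: "smooth_atlas A" and oI: "open I" and mcfA: "\<forall>(U,\<psi>)\<in>A.
        smooth_on (U \<times> I) (\<lambda>(u,t). F (\<psi> u) t) \<and>
        smooth_on (U \<times> I) (\<lambda>(u,t). N (\<psi> u) t) \<and>
        (\<forall>u\<in>U. \<forall>t\<in>I.
           norm (N (\<psi> u) t) = 1 \<and>
           (\<forall>i. N (\<psi> u) t \<bullet> Du i (\<lambda>(u,t). F (\<psi> u) t) (u,t) = 0) \<and>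
           (\<forall>v::real^'n. (\<Sum>i\<in>UNIV. v $ i *\<^sub>R Du i (\<lambda>(u,t). F (\<psi> u) t) (u,t)) = 0 \<longrightarrow> v = 0) \<and>
           Dt (\<lambda>(u,t). F (\<psi> u) t) (u,t) =
             mean_curv (\<lambda>(u,t). F (\<psi> u) t) (\<lambda>(u,t). N (\<psi> u) t) (u,t) *\<^sub>R N (\<psi> u) t)"
    using Gamma unfolding mcf_def by auto
  have atlB: "smooth_atlas B" and mcfB: "\<forall>(V,\<rho>)\<in>B.
        smooth_on (V \<times> I) (\<lambda>(v,t). G (\<rho> v) t) \<and>
        smooth_on (V \<times> I) (\<lambda>(v,t). NS (\<rho> v) t) \<and>
        (\<forall>v\<in>V. \<forall>t\<in>I.
           norm (NS (\<rho> v) t) = 1 \<and>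
           (\<forall>i. NS (\<rho> v) t \<bullet> Du i (\<lambda>(v,t). G (\<rho> v) t) (v,t) = 0) \<and>
           (\<forall>w::real^'n. (\<Sum>i\<in>UNIV. w $ i *\<^sub>R Du i (\<lambda>(v,t). G (\<rho> v) t) (v,t)) = 0 \<longrightarrow> w = 0) \<and>
           Dt (\<lambda>(v,t). G (\<rho> v) t) (v,t) =
             mean_curv (\<lambda>(v,t). G (\<rho> v) t) (\<lambda>(v,t). NS (\<rho> v) t) (v,t) *\<^sub>R NS (\<rho> v) t)"
    using Sigma unfolding mcf_def by auto
  have oU: "open U" using atlA UA unfolding smooth_atlas_def by auto
  have XA: "smooth_on (U \<times> I) X" and
    Xprops: "\<And>u t. u \<in> U \<Longrightarrow> t \<in> I \<Longrightarrow> norm (N (\<psi> u) t) = 1 \<and>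
           (\<forall>i. N (\<psi> u) t \<bullet> Du i X (u,t) = 0) \<and>
           (\<forall>v::real^'n. (\<Sum>i\<in>UNIV. v $ i *\<^sub>R Du i X (u,t)) = 0 \<longrightarrow> v = 0) \<and>
           Dt X (u,t) = mean_curv X Nf (u,t) *\<^sub>R N (\<psi> u) t"
    using mcfA UA unfolding X_def Nf_def by auto
  have Scl: "closed (range (\<lambda>q. G q t))" if "t \<in> I" for t
  proof (rule range_closed)
    show "continuous_on UNIV (\<lambda>q. G q t)"
      by (rule G_cont[OF atlB _ that]) (use mcfB smooth_Ck[of _ _ 0] in fastforce)
    show "proper_fun (\<lambda>q. G q t)" using proper that by blast
  qed
  have dpos: "d (F p t) t > 0" if "t \<in> I" for p t
    unfolding d_def using infdist_pos_not_in_closed[OF Scl[OF that]] disj that by blast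
  define xb where "xb = F (\<psi> u0) t0"
  obtain y0 where y0S: "y0 \<in> range (\<lambda>q. G q t0)" and y0d: "infdist xb (range (\<lambda>q. G q t0)) = dist xb y0"
    using infdist_attains_inf[OF Scl[OF t0I], of xb] by blast
  obtain q0 where q0: "y0 = G q0 t0" using y0S by blast
  have "q0 \<in> (\<Union>(V,\<rho>)\<in>B. \<rho> ` V)" using atlB unfolding smooth_atlas_def by simp
  then obtain V \<rho> where VB: "(V, \<rho>) \<in> B" and q0V: "q0 \<in> \<rho> ` V" by blast
  then obtain v0 where v0V: "v0 \<in> V" and q0v0: "q0 = \<rho> v0" by blast
  have oV: "open V" using atlB VB unfolding smooth_atlas_def by auto
  define Y where "Y = (\<lambda>(v,t). G (\<rho> v) t)"
  define NSf where "NSf = (\<lambda>(v,t). NS (\<rho> v) t)"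
  have YB: "smooth_on (V \<times> I) Y" and
    Yprops: "\<And>v t. v \<in> V \<Longrightarrow> t \<in> I \<Longrightarrow> norm (NS (\<rho> v) t) = 1 \<and>
           (\<forall>i. NS (\<rho> v) t \<bullet> Du i Y (v,t) = 0) \<and>
           (\<forall>w::real^'n. (\<Sum>i\<in>UNIV. w $ i *\<^sub>R Du i Y (v,t)) = 0 \<longrightarrow> w = 0) \<and>
           Dt Y (v,t) = mean_curv Y NSf (v,t) *\<^sub>R NS (\<rho> v) t"
    using mcfB VB unfolding Y_def NSf_def by auto
  have X2: "Ck 2 W X" using Ck_mono[OF smooth_Ck[OF XA] WUI] .
  have Y2: "Ck 2 (V \<times> I) Y" using smooth_Ck[OF YB] .
  have oVI: "open (V \<times> I)" using oV oI by (rule open_Times)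
  have r0V: "(v0, t0) \<in> V \<times> I" using v0V t0I by simp
  have Phi2': "Ck 2 W Phi" using Phi2 unfolding Phi_def .
  have lowgen: "X (u, t) \<noteq> Y (v, t) \<and>
      Phi (u, t) \<ge> exp (c1 + c2 * ((norm (X (u, t) - x0))\<^sup>2 + 2 * real CARD('n) * t)) / norm (X (u, t) - Y (v, t))"
    if uW: "(u, t) \<in> W" and tt: "t \<le> t0" and vV: "v \<in> V" for u t v
  proof -
    have tI: "t \<in> I" using uW WUI by auto
    have XS: "X (u, t) \<in> range (\<lambda>p. F p t)" unfolding X_def by simp
    have YS: "Y (v, t) \<in> range (\<lambda>q. G q t)" unfolding Y_def by simp
    have "range (\<lambda>p. F p t) \<inter> range (\<lambda>q. G q t) = {}" using disj tI by blast
    then have ne: "X (u, t) \<noteq> Y (v, t)" using XS YS by (metis disjoint_iff)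
    have dp: "d (X (u, t)) t > 0" unfolding X_def using dpos[OF tI] by simp
    have dle: "d (X (u, t)) t \<le> norm (X (u, t) - Y (v, t))"
      unfolding d_def using infdist_le[OF YS] by (simp add: dist_norm)
    have "Phi (u, t) \<ge> exp (f (X (u, t)) t) / d (X (u, t)) t"
      using above uW tt unfolding Phi_def X_def by fastforce
    moreover have "exp (f (X (u, t)) t) / d (X (u, t)) t \<ge> exp (f (X (u, t)) t) / norm (X (u, t) - Y (v, t))"
    proof (rule divide_left_mono)
      show "0 < norm (X (u, t) - Y (v, t)) * d (X (u, t)) t" using dp dle by (intro mult_pos_pos) auto
    qed (use dp dle in auto)
    moreover have "f (X (u, t)) t = c1 + c2 * ((norm (X (u, t) - x0))\<^sup>2 + 2 * real CARD('n) * t)"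
      unfolding f_def by (rule refl)
    ultimately show ?thesis using ne by simp
  qed
  have eqgen: "Phi (u0, t0) = exp (c1 + c2 * ((norm (X (u0, t0) - x0))\<^sup>2 + 2 * real CARD('n) * t0)) / norm (X (u0, t0) - Y (v0, t0))"
  proof -
    have "d xb t0 = norm (X (u0, t0) - Y (v0, t0))"
      unfolding d_def using y0d q0 q0v0 by (simp add: X_def Y_def xb_def dist_norm)
    moreover have "f xb t0 = c1 + c2 * ((norm (X (u0, t0) - x0))\<^sup>2 + 2 * real CARD('n) * t0)"
      unfolding f_def xb_def X_def by simp
    moreover have "Phi (u0, t0) = exp (f xb t0) / d xb t0" using touch unfolding Phi_def xb_def by simp
    ultimately show ?thesis by simp
  qed
  define Xv where "Xv = (\<lambda>i. Du i X (u0, t0))"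
  define Yv where "Yv = (\<lambda>i. Du i Y (v0, t0))"
  define \<nu> where "\<nu> = N (\<psi> u0) t0"
  define \<nu>S where "\<nu>S = NS (\<rho> v0) t0"
  define w where "w = X (u0, t0) - Y (v0, t0)"
  define a where "a = X (u0, t0) - x0"
  define \<Psi>0 where "\<Psi>0 = Phi (u0, t0)"
  define Qw where "Qw = w \<bullet> w"
  have nu1: "norm \<nu> = 1" and orthX: "\<forall>i. \<nu> \<bullet> Xv i = 0"
    and immX: "\<forall>v::real^'n. (\<Sum>i\<in>UNIV. v $ i *\<^sub>R Xv i) = 0 \<longrightarrow> v = 0"
    and DtX: "Dt X (u0, t0) = mean_curv X Nf (u0, t0) *\<^sub>R \<nu>"
    using Xprops[OF u0U t0I] unfolding \<nu>_def Xv_def by auto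
  have nuS1: "norm \<nu>S = 1" and orthY: "\<forall>i. \<nu>S \<bullet> Yv i = 0"
    and immY: "\<forall>v::real^'n. (\<Sum>i\<in>UNIV. v $ i *\<^sub>R Yv i) = 0 \<longrightarrow> v = 0"
    and DtY: "Dt Y (v0, t0) = mean_curv Y NSf (v0, t0) *\<^sub>R \<nu>S"
    using Yprops[OF v0V t0I] unfolding \<nu>S_def Yv_def by auto
  have wne: "w \<noteq> 0" using lowgen[OF p0W order_refl v0V] unfolding w_def by simp
  have Qpos: "Qw > 0" unfolding Qw_def using wne by simp
  have Psi_pos: "\<Psi>0 > 0" unfolding \<Psi>0_def eqgen using wne w_def by simp
  have low': "X ((u0, t0) + s *\<^sub>R (\<alpha>, 0)) \<noteq> Y ((v0, t0) + s *\<^sub>R (\<beta>, 0)) \<and>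
         Phi ((u0, t0) + s *\<^sub>R (\<alpha>, 0)) \<ge> exp (c1 + c2 * ((norm (X ((u0, t0) + s *\<^sub>R (\<alpha>, 0)) - x0))\<^sup>2 + 2 * real CARD('n) * t0))
             / norm (X ((u0, t0) + s *\<^sub>R (\<alpha>, 0)) - Y ((v0, t0) + s *\<^sub>R (\<beta>, 0)))"
    if "(u0, t0) + s *\<^sub>R (\<alpha>, 0) \<in> W" "(v0, t0) + s *\<^sub>R (\<beta>, 0) \<in> V \<times> I" for s \<alpha> \<beta>
  proof -
    have e1: "(u0, t0) + s *\<^sub>R (\<alpha>, 0::real) = (u0 + s *\<^sub>R \<alpha>, t0)" by simp
    have e2: "(v0, t0) + s *\<^sub>R (\<beta>, 0::real) = (v0 + s *\<^sub>R \<beta>, t0)" by simp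
    show ?thesis using lowgen[of "u0 + s *\<^sub>R \<alpha>" t0 "v0 + s *\<^sub>R \<beta>"] that unfolding e1 e2 by auto
  qed
  note SPA = spatial[OF Phi2' X2 oW p0W Y2 oVI r0V low' eqgen refl]
  have FO: "(\<Sum>j\<in>UNIV. \<alpha> $ j * Du j Phi (u0, t0)) = \<Psi>0 * (c2 * (2 * (a \<bullet> (\<Sum>j\<in>UNIV. \<alpha> $ j *\<^sub>R Xv j)))
       - 2 * (w \<bullet> ((\<Sum>j\<in>UNIV. \<alpha> $ j *\<^sub>R Xv j) - (\<Sum>j\<in>UNIV. \<beta> $ j *\<^sub>R Yv j))) / (2 * Qw))" for \<alpha> \<beta>
    using SPA(1)[of \<alpha> \<beta>] unfolding Xv_def Yv_def \<Psi>0_def a_def w_def Qw_def by simp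
  have SO: "(\<Sum>j\<in>UNIV. \<alpha> $ j * (\<Sum>i\<in>UNIV. \<alpha> $ i * Du i (\<lambda>q. Du j Phi q) (u0, t0))) \<ge>
         \<Psi>0 * ((c2 * (2 * (a \<bullet> (\<Sum>j\<in>UNIV. \<alpha> $ j *\<^sub>R Xv j)))
       - 2 * (w \<bullet> ((\<Sum>j\<in>UNIV. \<alpha> $ j *\<^sub>R Xv j) - (\<Sum>j\<in>UNIV. \<beta> $ j *\<^sub>R Yv j))) / (2 * Qw))\<^sup>2
         + c2 * (2 * (a \<bullet> (\<Sum>j\<in>UNIV. \<alpha> $ j *\<^sub>R (\<Sum>i\<in>UNIV. \<alpha> $ i *\<^sub>R Du i (\<lambda>q. Du j X q) (u0, t0)))
             + (\<Sum>j\<in>UNIV. \<alpha> $ j *\<^sub>R Xv j) \<bullet> (\<Sum>j\<in>UNIV. \<alpha> $ j *\<^sub>R Xv j)))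
         - 2 * (w \<bullet> ((\<Sum>j\<in>UNIV. \<alpha> $ j *\<^sub>R (\<Sum>i\<in>UNIV. \<alpha> $ i *\<^sub>R Du i (\<lambda>q. Du j X q) (u0, t0)))
                    - (\<Sum>j\<in>UNIV. \<beta> $ j *\<^sub>R (\<Sum>i\<in>UNIV. \<beta> $ i *\<^sub>R Du i (\<lambda>q. Du j Y q) (v0, t0))))
             + ((\<Sum>j\<in>UNIV. \<alpha> $ j *\<^sub>R Xv j) - (\<Sum>j\<in>UNIV. \<beta> $ j *\<^sub>R Yv j)) \<bullet> ((\<Sum>j\<in>UNIV. \<alpha> $ j *\<^sub>R Xv j) - (\<Sum>j\<in>UNIV. \<beta> $ j *\<^sub>R Yv j))) / (2 * Qw)
         + (2 * (w \<bullet> ((\<Sum>j\<in>UNIV. \<alpha> $ j *\<^sub>R Xv j) - (\<Sum>j\<in>UNIV. \<beta> $ j *\<^sub>R Yv j))))\<^sup>2 / (2 * Qw\<^sup>2))" for \<alpha> \<beta>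
    using SPA(2)[of \<alpha> \<beta>] unfolding Xv_def Yv_def \<Psi>0_def a_def w_def Qw_def by simp
  have wY: "w \<bullet> Yv b = 0" for b
  proof -
    have "(\<Sum>j\<in>UNIV. (0::real^'n) $ j * Du j Phi (u0, t0)) = \<Psi>0 * (c2 * (2 * (a \<bullet> (\<Sum>j\<in>UNIV. (0::real^'n) $ j *\<^sub>R Xv j)))
       - 2 * (w \<bullet> ((\<Sum>j\<in>UNIV. (0::real^'n) $ j *\<^sub>R Xv j) - (\<Sum>j\<in>UNIV. (axis b 1) $ j *\<^sub>R Yv j))) / (2 * Qw))"
      by (rule FO)
    then have "0 = \<Psi>0 * ((w \<bullet> Yv b) / Qw)" by (simp add: sum_axis_scale)
    then show ?thesis using Psi_pos Qpos by simp
  qed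
  define hi where "hi = matrix_inv (\<chi> i j. Yv i \<bullet> Yv j)"
  have wS: "w = (w \<bullet> \<nu>S) *\<^sub>R \<nu>S"
    using decomp_frame[OF immY orthY nuS1 dim, of w] wY by simp
  define e where "e = (1 / norm w) *\<^sub>R w"
  have e1: "norm e = 1" unfolding e_def using wne by simp
  have wnS: "w \<bullet> \<nu>S \<noteq> 0" using wS wne by (metis scaleR_zero_left)
  have eS: "Z \<bullet> e = 0 \<longleftrightarrow> Z \<bullet> \<nu>S = 0" for Z
  proof -
    have "Z \<bullet> e = ((w \<bullet> \<nu>S) / norm w) * (Z \<bullet> \<nu>S)"
      unfolding e_def by (subst wS) (simp add: inner_commute)
    then show ?thesis using wnS wne by simp
  qed
  have ew: "(e \<bullet> z)\<^sup>2 = (w \<bullet> z)\<^sup>2 / Qw" for z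
    unfolding e_def Qw_def using wne by (simp add: power2_eq_square power2_norm_eq_inner[symmetric] field_simps)
  define \<nu>' where "\<nu>' = (if \<nu> \<bullet> e \<le> 0 then \<nu> else - \<nu>)"
  have nu'1: "norm \<nu>' = 1" unfolding \<nu>'_def using nu1 by simp
  have nu'e: "\<nu>' \<bullet> e \<le> 0" unfolding \<nu>'_def by simp
  have orthX': "\<forall>i. \<nu>' \<bullet> Xv i = 0" unfolding \<nu>'_def using orthX by simp
  obtain \<tau> :: "'n \<Rightarrow> real^'N" where tau1: "\<And>k. norm (\<tau> k) = 1" and taun: "\<And>k. \<tau> k \<bullet> \<nu>' = 0"
    and taup: "\<And>Z. Z \<bullet> \<nu>' = 0 \<Longrightarrow> Z = (\<Sum>k\<in>UNIV. (Z \<bullet> \<tau> k) *\<^sub>R \<tau> k)"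
    using onb_hyperplane[OF nu'1 dim] by blast
  obtain \<sigma> :: "'n \<Rightarrow> real^'N" where sige: "\<And>k. \<sigma> k \<bullet> e = 0"
    and sigp: "\<And>Z. Z \<bullet> e = 0 \<Longrightarrow> Z = (\<Sum>k\<in>UNIV. (Z \<bullet> \<sigma> k) *\<^sub>R \<sigma> k)"
    and tsig: "\<And>k. (norm (\<tau> k - \<sigma> k))\<^sup>2 \<le> 2 * (e \<bullet> \<tau> k)\<^sup>2"
    using reflect_frame[OF nu'1 e1 nu'e taun taup] by blast
  have sigS: "\<sigma> k \<bullet> \<nu>S = 0" for k using sige eS by blast
  have sigpS: "Z = (\<Sum>k\<in>UNIV. (Z \<bullet> \<sigma> k) *\<^sub>R \<sigma> k)" if "Z \<bullet> \<nu>S = 0" for Z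
    using sigp eS that by blast
  define gi where "gi = matrix_inv (\<chi> i j. Xv i \<bullet> Xv j)"
  define P where "P = (\<lambda>i k. \<Sum>m\<in>UNIV. gi $ i $ m * (Xv m \<bullet> \<tau> k))"
  define Q where "Q = (\<lambda>i k. \<Sum>m\<in>UNIV. hi $ i $ m * (Yv m \<bullet> \<sigma> k))"
  have tauP: "\<tau> k = (\<Sum>i\<in>UNIV. P i k *\<^sub>R Xv i)" and PP: "(\<Sum>k\<in>UNIV. P i k * P j k) = gi $ i $ j" for i j k
    using frame_coords[OF immX orthX' nu'1 dim taun taup] unfolding P_def gi_def by blast+
  have sigQ: "\<sigma> k = (\<Sum>i\<in>UNIV. Q i k *\<^sub>R Yv i)" and QQ: "(\<Sum>k\<in>UNIV. Q i k * Q j k) = hi $ i $ j" for i j k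
    using frame_coords[OF immY orthY nuS1 dim sigS sigpS] unfolding Q_def hi_def by blast+
  define X2v where "X2v = (\<lambda>i j. Du i (\<lambda>q. Du j X q) (u0, t0))"
  define Y2v where "Y2v = (\<lambda>i j. Du i (\<lambda>q. Du j Y q) (v0, t0))"
  define Phi2v where "Phi2v = (\<lambda>i j. Du i (\<lambda>q. Du j Phi q) (u0, t0))"
  define Xaa where "Xaa = (\<lambda>k. \<Sum>j\<in>UNIV. P j k *\<^sub>R (\<Sum>i\<in>UNIV. P i k *\<^sub>R X2v i j))"
  define Ybb where "Ybb = (\<lambda>k. \<Sum>j\<in>UNIV. Q j k *\<^sub>R (\<Sum>i\<in>UNIV. Q i k *\<^sub>R Y2v i j))"
  define Lx where "Lx = (\<Sum>i\<in>UNIV. \<Sum>j\<in>UNIV. gi $ i $ j *\<^sub>R X2v i j)"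
  define Ly where "Ly = (\<Sum>i\<in>UNIV. \<Sum>j\<in>UNIV. hi $ i $ j *\<^sub>R Y2v i j)"
  have wZ: "w \<bullet> Z = (w \<bullet> \<nu>S) * (\<nu>S \<bullet> Z)" for Z
  proof -
    from wS have "w \<bullet> Z = ((w \<bullet> \<nu>S) *\<^sub>R \<nu>S) \<bullet> Z" by (rule arg_cong[where f="\<lambda>v. v \<bullet> Z"])
    then show ?thesis by simp
  qed
  have wsig: "w \<bullet> \<sigma> k = 0" for k
  proof -
    have "\<sigma> k \<bullet> e = (1 / norm w) * (\<sigma> k \<bullet> w)" unfolding e_def by simp
    then show ?thesis using sige[of k] wne by (simp add: inner_commute)
  qed
  have SOk: "(\<Sum>j\<in>UNIV. P j k * (\<Sum>i\<in>UNIV. P i k * Phi2v i j))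
      \<ge> \<Psi>0 * (2 * c2 * (a \<bullet> Xaa k) + 2 * c2 - (w \<bullet> Xaa k) / Qw + (w \<bullet> Ybb k) / Qw)" for k
  proof -
    define Lk where "Lk = c2 * (2 * (a \<bullet> \<tau> k)) - 2 * (w \<bullet> (\<tau> k - \<sigma> k)) / (2 * Qw)"
    define D where "D = (\<tau> k - \<sigma> k) \<bullet> (\<tau> k - \<sigma> k)"
    have S: "(\<Sum>j\<in>UNIV. P j k * (\<Sum>i\<in>UNIV. P i k * Phi2v i j)) \<ge>
         \<Psi>0 * (Lk\<^sup>2 + c2 * (2 * (a \<bullet> Xaa k + \<tau> k \<bullet> \<tau> k))
         - 2 * (w \<bullet> (Xaa k - Ybb k) + D) / (2 * Qw)
         + (2 * (w \<bullet> (\<tau> k - \<sigma> k)))\<^sup>2 / (2 * Qw\<^sup>2))"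
      using SO[of "\<chi> i. P i k" "\<chi> i. Q i k"]
      unfolding Lk_def D_def Xaa_def Ybb_def X2v_def Y2v_def Phi2v_def
      by (simp add: tauP[symmetric] sigQ[symmetric])
    have tt: "\<tau> k \<bullet> \<tau> k = 1" using tau1[of k] by (simp add: norm_eq_sqrt_inner)
    have Dle: "D \<le> 2 * (w \<bullet> \<tau> k)\<^sup>2 / Qw"
      using tsig[of k] ew[of "\<tau> k"] unfolding D_def by (simp add: power2_norm_eq_inner)
    have "2 * (w \<bullet> (\<tau> k - \<sigma> k)) = 2 * (w \<bullet> \<tau> k)" using wsig[of k] by (simp add: inner_diff_right)
    then have eqn: "Lk\<^sup>2 + c2 * (2 * (a \<bullet> Xaa k + \<tau> k \<bullet> \<tau> k))
         - 2 * (w \<bullet> (Xaa k - Ybb k) + D) / (2 * Qw)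
         + (2 * (w \<bullet> (\<tau> k - \<sigma> k)))\<^sup>2 / (2 * Qw\<^sup>2)
       = (2 * c2 * (a \<bullet> Xaa k) + 2 * c2 - (w \<bullet> Xaa k) / Qw + (w \<bullet> Ybb k) / Qw)
         + Lk\<^sup>2 + (2 * (w \<bullet> \<tau> k)\<^sup>2 / Qw - D) / Qw"
      using Qpos tt by (simp add: field_simps power2_eq_square inner_diff_right)
    have "(2 * (w \<bullet> \<tau> k)\<^sup>2 / Qw - D) / Qw \<ge> 0" using Dle Qpos by simp
    then have "(2 * c2 * (a \<bullet> Xaa k) + 2 * c2 - (w \<bullet> Xaa k) / Qw + (w \<bullet> Ybb k) / Qw) \<le>
         Lk\<^sup>2 + c2 * (2 * (a \<bullet> Xaa k + \<tau> k \<bullet> \<tau> k))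
         - 2 * (w \<bullet> (Xaa k - Ybb k) + D) / (2 * Qw)
         + (2 * (w \<bullet> (\<tau> k - \<sigma> k)))\<^sup>2 / (2 * Qw\<^sup>2)"
      unfolding eqn by simp
    then have "\<Psi>0 * (2 * c2 * (a \<bullet> Xaa k) + 2 * c2 - (w \<bullet> Xaa k) / Qw + (w \<bullet> Ybb k) / Qw) \<le>
         \<Psi>0 * (Lk\<^sup>2 + c2 * (2 * (a \<bullet> Xaa k + \<tau> k \<bullet> \<tau> k))
         - 2 * (w \<bullet> (Xaa k - Ybb k) + D) / (2 * Qw)
         + (2 * (w \<bullet> (\<tau> k - \<sigma> k)))\<^sup>2 / (2 * Qw\<^sup>2))"
      using Psi_pos by (intro mult_left_mono) auto
    then show ?thesis using S by linarith
  qed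
  have sumXaa: "(\<Sum>k\<in>UNIV. Xaa k) = Lx"
    unfolding Xaa_def Lx_def trace_P PP by simp
  have sumYbb: "(\<Sum>k\<in>UNIV. Ybb k) = Ly"
    unfolding Ybb_def Ly_def trace_P QQ by simp
  define A1 where "A1 = (\<Sum>i\<in>UNIV. \<Sum>j\<in>UNIV. gi $ i $ j * Phi2v i j)"
  have A1eq: "A1 = (\<Sum>k\<in>UNIV. \<Sum>j\<in>UNIV. P j k * (\<Sum>i\<in>UNIV. P i k * Phi2v i j))"
    using trace_P[where M=Phi2v and P=P] unfolding A1_def PP by simp
  have A1ge: "A1 \<ge> \<Psi>0 * (2 * c2 * (a \<bullet> Lx) + 2 * c2 * real CARD('n) - (w \<bullet> Lx) / Qw + (w \<bullet> Ly) / Qw)"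
  proof -
    have "A1 \<ge> (\<Sum>k\<in>UNIV. \<Psi>0 * (2 * c2 * (a \<bullet> Xaa k) + 2 * c2 - (w \<bullet> Xaa k) / Qw + (w \<bullet> Ybb k) / Qw))"
      unfolding A1eq by (rule sum_mono) (rule SOk)
    also have "(\<Sum>k\<in>UNIV. \<Psi>0 * (2 * c2 * (a \<bullet> Xaa k) + 2 * c2 - (w \<bullet> Xaa k) / Qw + (w \<bullet> Ybb k) / Qw))
       = \<Psi>0 * (2 * c2 * (a \<bullet> (\<Sum>k\<in>UNIV. Xaa k)) + 2 * c2 * real CARD('n) - (w \<bullet> (\<Sum>k\<in>UNIV. Xaa k)) / Qw + (w \<bullet> (\<Sum>k\<in>UNIV. Ybb k)) / Qw)"
      by (simp add: sum_distrib_left[symmetric] sum.distrib sum_subtractf inner_sum_right sum_divide_distrib[symmetric] sum_distrib_left mult.commute)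
    finally show ?thesis unfolding sumXaa sumYbb .
  qed
  define H where "H = mean_curv X Nf (u0, t0)"
  define HS where "HS = mean_curv Y NSf (v0, t0)"
  define coef where "coef = (\<lambda>l. \<Sum>i\<in>UNIV. \<Sum>j\<in>UNIV. gi $ i $ j * christoffel X l i j (u0, t0))"
  define T where "T = (\<Sum>l\<in>UNIV. coef l *\<^sub>R Xv l)"
  have ginvX: "ginv X (u0, t0) = gi" unfolding ginv_def gmat_def gi_def Xv_def by simp
  have ginvY: "ginv Y (v0, t0) = hi" unfolding ginv_def gmat_def hi_def Yv_def by simp
  have chr: "christoffel X l i j (u0, t0) = (\<Sum>m\<in>UNIV. gi $ l $ m * (X2v i j \<bullet> Xv m))" for l i j
    unfolding christoffel_def ginvX X2v_def Xv_def by simp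
  have Hdef: "H = (\<Sum>i\<in>UNIV. \<Sum>j\<in>UNIV. gi $ i $ j * (X2v i j \<bullet> \<nu>))"
    unfolding H_def mean_curv_def ginvX X2v_def \<nu>_def Nf_def by simp
  have HSdef: "HS = (\<Sum>i\<in>UNIV. \<Sum>j\<in>UNIV. hi $ i $ j * (Y2v i j \<bullet> \<nu>S))"
    unfolding HS_def mean_curv_def ginvY Y2v_def \<nu>S_def NSf_def by simp
  have LxD: "Lx = T + H *\<^sub>R \<nu>"
  proof -
    have "Lx = (\<Sum>i\<in>UNIV. \<Sum>j\<in>UNIV. gi $ i $ j *\<^sub>R ((\<Sum>l\<in>UNIV. christoffel X l i j (u0, t0) *\<^sub>R Xv l) + (X2v i j \<bullet> \<nu>) *\<^sub>R \<nu>))"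
      unfolding Lx_def chr gi_def[symmetric]
      by (subst decomp_frame[OF immX orthX nu1 dim]) (simp add: gi_def)
    also have "\<dots> = T + H *\<^sub>R \<nu>" unfolding sum3_decomp T_def coef_def Hdef ..
    finally show ?thesis .
  qed
  have wLy: "w \<bullet> Ly = (w \<bullet> \<nu>S) * HS"
    unfolding Ly_def HSdef by (simp add: inner_sum_right wZ sum_distrib_left mult_ac inner_commute)
  have DuPhi: "Du l Phi (u0, t0) = \<Psi>0 * (c2 * (2 * (a \<bullet> Xv l)) - 2 * (w \<bullet> Xv l) / (2 * Qw))" for l
    using FO[of "axis l 1" 0] by (simp add: sum_axis_mult sum_axis_scale)
  define C where "C = (\<Sum>i\<in>UNIV. \<Sum>j\<in>UNIV. gi $ i $ j * (\<Sum>k\<in>UNIV. christoffel X k i j (u0, t0) * Du k Phi (u0, t0)))"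
  have Ceq: "C = \<Psi>0 * (c2 * (2 * (a \<bullet> T)) - 2 * (w \<bullet> T) / (2 * Qw))"
  proof -
    have "C = (\<Sum>k\<in>UNIV. coef k * Du k Phi (u0, t0))"
      unfolding C_def coef_def
      by (simp add: sum_distrib_left sum_distrib_right mult_ac, subst sum.swap, rule sum.cong[OF refl], subst sum.swap, simp)
    also have "\<dots> = \<Psi>0 * (c2 * (2 * (a \<bullet> T)) - 2 * (w \<bullet> T) / (2 * Qw))"
      unfolding DuPhi T_def
      by (simp add: inner_sum_right sum_distrib_left sum_subtractf right_diff_distrib sum_divide_distrib mult_ac)
    finally show ?thesis .
  qed
  have lowt: "X (u0, t) \<noteq> Y (v0, t) \<and>
         Phi (u0, t) \<ge> exp (c1 + c2 * ((norm (X (u0, t) - x0))\<^sup>2 + (2 * real CARD('n)) * t)) / norm (X (u0, t) - Y (v0, t))"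
    if "(u0, t) \<in> W" "(v0, t) \<in> V \<times> I" "t \<le> t0" for t
    using lowgen[of u0 t v0] that by auto
  have TMP: "Dt Phi (u0, t0) \<le> \<Psi>0 * (c2 * (2 * (a \<bullet> Dt X (u0, t0)) + 2 * real CARD('n))
           - 2 * (w \<bullet> (Dt X (u0, t0) - Dt Y (v0, t0))) / (2 * Qw))"
    using temporal[OF Phi2' X2 oW p0W Y2 oVI r0V lowt eqgen]
    unfolding \<Psi>0_def a_def w_def Qw_def by simp
  have heq: "heat_op (\<lambda>(u,t). F (\<psi> u) t) (\<lambda>(u,t). \<phi> (\<psi> u) t) (u0, t0) = Dt Phi (u0, t0) - (A1 - C)"
  proof -
    have "laplace_beltrami X Phi (u0, t0) = A1 - C"
      unfolding laplace_beltrami_def ginvX A1_def C_def Phi2v_def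
      by (simp add: right_diff_distrib sum_subtractf)
    then show ?thesis unfolding heat_op_def X_def Phi_def by simp
  qed
  have aLx: "a \<bullet> Lx = a \<bullet> T + H * (a \<bullet> \<nu>)" and wLx: "w \<bullet> Lx = w \<bullet> T + H * (w \<bullet> \<nu>)"
    unfolding LxD by (simp_all add: inner_add_right)
  have fin: "Dt Phi (u0, t0) - (A1 - C) \<le> \<Psi>0 * 0"
  proof -
    have "Dt Phi (u0, t0) - (A1 - C) \<le>
        \<Psi>0 * (c2 * (2 * (H * (a \<bullet> \<nu>)) + 2 * real CARD('n)) - 2 * (H * (w \<bullet> \<nu>) - HS * (w \<bullet> \<nu>S)) / (2 * Qw))
      - \<Psi>0 * (2 * c2 * (a \<bullet> T + H * (a \<bullet> \<nu>)) + 2 * c2 * real CARD('n) - (w \<bullet> T + H * (w \<bullet> \<nu>)) / Qw + ((w \<bullet> \<nu>S) * HS) / Qw)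
      + \<Psi>0 * (c2 * (2 * (a \<bullet> T)) - 2 * (w \<bullet> T) / (2 * Qw))"
    proof -
      have TMP': "Dt Phi (u0, t0) \<le> \<Psi>0 * (c2 * (2 * (H * (a \<bullet> \<nu>)) + 2 * real CARD('n)) - 2 * (H * (w \<bullet> \<nu>) - HS * (w \<bullet> \<nu>S)) / (2 * Qw))"
        using TMP unfolding DtX DtY H_def[symmetric] HS_def[symmetric] by (simp add: inner_diff_right)
      have A1': "A1 \<ge> \<Psi>0 * (2 * c2 * (a \<bullet> T + H * (a \<bullet> \<nu>)) + 2 * c2 * real CARD('n) - (w \<bullet> T + H * (w \<bullet> \<nu>)) / Qw + ((w \<bullet> \<nu>S) * HS) / Qw)"
        using A1ge unfolding aLx wLx wLy .
      have gen: "\<And>x p q y c r. (x::real) \<le> p \<Longrightarrow> q \<le> y \<Longrightarrow> c = r \<Longrightarrow> x - (y - c) \<le> p - q + r" by linarith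
      show ?thesis by (rule gen[OF TMP' A1' Ceq])
    qed
    also have "\<dots> = \<Psi>0 * 0" using Qpos by (simp add: field_simps)
    finally show ?thesis .
  qed
  show ?thesis using heq fin by simp
qed


theorem lemma19:
  fixes A :: "((real^'n::finite) set \<times> (real^'n \<Rightarrow> 'm::topological_space)) set"
    and F N :: "'m \<Rightarrow> real \<Rightarrow> real^'N::finite"
    and B :: "((real^'n) set \<times> (real^'n \<Rightarrow> 'q::topological_space)) set"
    and G NS :: "'q \<Rightarrow> real \<Rightarrow> real^'N"
    and I :: "real set" and c1 c2 :: real and x0 :: "real^'N"
    and d f :: "real^'N \<Rightarrow> real \<Rightarrow> real"
  assumes dim: "CARD('N) = CARD('n) + 1"
    and Gamma: "mcf A I F N"
    and Sigma: "mcf B I G NS"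
    and proper: "\<forall>t\<in>I. proper_fun (\<lambda>q. G q t)"
    and disj: "\<forall>t\<in>I. range (\<lambda>p. F p t) \<inter> range (\<lambda>q. G q t) = {}"
    and d_def: "d = (\<lambda>x t. infdist x (range (\<lambda>q. G q t)))"
    and f_def: "f = (\<lambda>x t. c1 + c2 * ((norm (x - x0))\<^sup>2 + 2 * real CARD('n) * t))"
  shows "\<forall>(U,\<psi>)\<in>A. \<forall>u0\<in>U. \<forall>t0\<in>I. \<forall>(\<phi>::'m \<Rightarrow> real \<Rightarrow> real) W.
           open W \<and> (u0, t0) \<in> W \<and> W \<subseteq> U \<times> I \<and>
           Ck 2 W (\<lambda>(u,t). \<phi> (\<psi> u) t) \<and>
           (\<forall>(u,t)\<in>W. t \<le> t0 \<longrightarrow>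
               \<phi> (\<psi> u) t \<ge> exp (f (F (\<psi> u) t) t) / d (F (\<psi> u) t) t) \<and>
           \<phi> (\<psi> u0) t0 = exp (f (F (\<psi> u0) t0) t0) / d (F (\<psi> u0) t0) t0
           \<longrightarrow> heat_op (\<lambda>(u,t). F (\<psi> u) t) (\<lambda>(u,t). \<phi> (\<psi> u) t) (u0, t0) \<le> 0"
proof -
  have H: "heat_op (\<lambda>(u,t). F (\<psi> u) t) (\<lambda>(u,t). \<phi> (\<psi> u) t) (u0, t0) \<le> 0"
    if "(U, \<psi>) \<in> A" "u0 \<in> U" "t0 \<in> I"
      "open W \<and> (u0, t0) \<in> W \<and> W \<subseteq> U \<times> I \<and>
           Ck 2 W (\<lambda>(u,t). \<phi> (\<psi> u) t) \<and>
           (\<forall>(u,t)\<in>W. t \<le> t0 \<longrightarrow>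
               \<phi> (\<psi> u) t \<ge> exp (f (F (\<psi> u) t) t) / d (F (\<psi> u) t) t) \<and>
           \<phi> (\<psi> u0) t0 = exp (f (F (\<psi> u0) t0) t0) / d (F (\<psi> u0) t0) t0"
    for U \<psi> u0 t0 \<phi> W
    using that by (intro main_local[OF dim Gamma Sigma proper disj d_def f_def]) auto
  show ?thesis using H by blast
qed

end
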